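(* Let $n$ be a positive odd integer. Then $$ \sum_{k=0}^{n-1}\frac{(aq;q^2)_k\,(bq;q^2)_k\,(x;q^2)_k\, q^{2k}}{(q^2;q^2)_k\,(abq^4;q^4)_k} \equiv (-1)^{(n-1)/2}\sum_{k=0}^{n-1}\frac{(aq;q^2)_k\,(bq;q^2)_k\,(-x;q^2)_k\, q^{2k}}{(q^2;q^2)_k\,(abq^4;q^4)_k} \pmod{(1-aq^n)(1-bq^n)}. $$
   Context: $a,b,q,x$ are indeterminates. The $q$-shifted factorial is $(y;q)_0=1$ and $(y;q)_m=(1-y)(1-yq)\cdots(1-yq^{m-1})$ for $m\geqslant1$. For rational functions $A,B$ and a polynomial $P$, $A\equiv B\pmod P$ means $A-B=P\cdot C/D$ for polynomials $C,D$ with $D$ coprime to $P$. *)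

theory Defs
  imports "HOL-Computational_Algebra.Polynomial" "HOL-Computational_Algebra.Fraction_Field"
begin

text \<open>Polynomials in the four indeterminates x, q, b, a (nested univariate
polynomials over the rationals) and rational functions = their fraction field.\<close>

type_synonym mpoly4 = "rat poly poly poly poly"
type_synonym ratfun4 = "mpoly4 fract"

definition varX :: mpoly4 where "varX = [:0, 1:]"
definition varQ :: mpoly4 where "varQ = [:[:0, 1:]:]"
definition varB :: mpoly4 where "varB = [:[:[:0, 1:]:]:]"
definition varA :: mpoly4 where "varA = [:[:[:[:0, 1:]:]:]:]"

definition qpoch :: "'a::comm_ring_1 \<Rightarrow> 'a \<Rightarrow> nat \<Rightarrow> 'a" where
  "qpoch y z m = (\<Prod>j<m. 1 - y * z ^ j)"

definition cong_rf :: "ratfun4 \<Rightarrow> ratfun4 \<Rightarrow> mpoly4 \<Rightarrow> bool" where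
  "cong_rf A B P \<longleftrightarrow> (\<exists>C D. D \<noteq> 0 \<and> coprime D P \<and>
      A - B = Fract P 1 * Fract C 1 / Fract D 1)"

end

theory Submission
  imports Defs "HOL-Computational_Algebra.Polynomial_Factorial" "HOL-Computational_Algebra.Field_as_Ring"
begin


definition rhom :: "('a::comm_ring_1 \<Rightarrow> 'b::comm_ring_1) \<Rightarrow> bool" where
  "rhom f \<longleftrightarrow> f 0 = 0 \<and> f 1 = 1 \<and> (\<forall>a b. f (a + b) = f a + f b) \<and> (\<forall>a b. f (a * b) = f a * f b)"

lemma rhomD:
  assumes "rhom f"
  shows "f 0 = 0" "f 1 = 1" "f (a + b) = f a + f b" "f (a * b) = f a * f b"
  using assms by (auto simp: rhom_def)

lemma rhom_uminus: "rhom f \<Longrightarrow> f (- a) = - f a"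
proof -
  assume f: "rhom f"
  have "f a + f (- a) = 0" using rhomD(3)[OF f, of a "-a"] rhomD(1)[OF f] by simp
  then show ?thesis by (simp add: eq_neg_iff_add_eq_0 add.commute)
qed

lemma rhom_diff: "rhom f \<Longrightarrow> f (a - b) = f a - f b"
  using rhomD(3)[of f a "-b"] rhom_uminus[of f b] by simp

lemma rhom_power: "rhom f \<Longrightarrow> f (a ^ k) = f a ^ k"
  by (induction k) (simp_all add: rhomD)

lemma rhom_sum: "rhom f \<Longrightarrow> f (sum g A) = (\<Sum>x\<in>A. f (g x))"
  by (induction A rule: infinite_finite_induct) (simp_all add: rhomD)

lemma rhom_prod: "rhom f \<Longrightarrow> f (prod g A) = (\<Prod>x\<in>A. f (g x))"
  by (induction A rule: infinite_finite_induct) (simp_all add: rhomD)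

lemma rhom_dvd: "rhom f \<Longrightarrow> a dvd b \<Longrightarrow> f a dvd f b"
  by (auto simp: dvd_def rhomD)

lemma rhom_unit: "rhom f \<Longrightarrow> is_unit a \<Longrightarrow> is_unit (f a)"
  using rhom_dvd[of f a 1] by (simp add: rhomD)

lemma rhom_comp: "rhom f \<Longrightarrow> rhom g \<Longrightarrow> rhom (\<lambda>x. g (f x))"
  by (simp add: rhom_def)

definition hev :: "('a::comm_ring_1 \<Rightarrow> 'b::comm_ring_1) \<Rightarrow> 'b \<Rightarrow> 'a poly \<Rightarrow> 'b" where
  "hev f z p = poly (map_poly f p) z"

lemma hev_0 [simp]: "hev f z 0 = 0" by (simp add: hev_def)

lemma hev_pCons: "rhom f \<Longrightarrow> hev f z (pCons a p) = f a + z * hev f z p"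
  by (simp add: hev_def map_poly_pCons rhomD)

lemma hev_add: "rhom f \<Longrightarrow> hev f z (p + q) = hev f z p + hev f z q"
proof -
  assume f: "rhom f"
  have "map_poly f (p + q) = map_poly f p + map_poly f q"
    by (intro poly_eqI) (simp add: coeff_map_poly rhomD[OF f])
  then show ?thesis by (simp add: hev_def)
qed

lemma hev_smult: "rhom f \<Longrightarrow> hev f z (smult a p) = f a * hev f z p"
proof -
  assume f: "rhom f"
  have "map_poly f (smult a p) = smult (f a) (map_poly f p)"
    by (rule map_poly_smult) (simp_all add: rhomD[OF f])
  then show ?thesis by (simp add: hev_def)
qed

lemma hev_mult: "rhom f \<Longrightarrow> hev f z (p * q) = hev f z p * hev f z q"
proof (induction p)
  case 0
  then show ?case by simp
next
  case (pCons a p)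
  have "hev f z (pCons a p * q) = hev f z (smult a q + pCons 0 (p * q))"
    by (simp add: mult_pCons_left)
  also have "\<dots> = f a * hev f z q + z * (hev f z p * hev f z q)"
    using pCons by (simp add: hev_add hev_smult hev_pCons rhomD)
  also have "\<dots> = hev f z (pCons a p) * hev f z q"
    using pCons by (simp add: hev_pCons algebra_simps)
  finally show ?case .
qed

lemma hev_1: "rhom f \<Longrightarrow> hev f z 1 = 1"
  by (simp add: hev_def rhomD)

lemma rhom_hev: "rhom f \<Longrightarrow> rhom (hev f z)"
  by (simp add: rhom_def hev_add hev_mult hev_1)

lemma hev_const: "rhom f \<Longrightarrow> hev f z [:a:] = f a"
  by (simp add: hev_pCons)

lemma hev_comp:
  assumes f: "rhom f" and g: "rhom g"
  shows "g (hev f z p) = hev (\<lambda>x. g (f x)) (g z) p"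
proof (induction p)
  case 0
  then show ?case by (simp add: rhomD[OF g])
next
  case (pCons a p)
  have r: "rhom (\<lambda>x. g (f x))" by (rule rhom_comp[OF f g])
  show ?case unfolding hev_pCons[OF r] hev_pCons[OF f] rhomD[OF g] pCons.IH ..
qed

definition ev4 :: "(rat \<Rightarrow> 'b::comm_ring_1) \<Rightarrow> 'b \<Rightarrow> 'b \<Rightarrow> 'b \<Rightarrow> 'b \<Rightarrow> mpoly4 \<Rightarrow> 'b" where
  "ev4 f X Q B A = hev (hev (hev (hev f A) B) Q) X"

lemma rhom_ev4: "rhom f \<Longrightarrow> rhom (ev4 f X Q B A)"
  unfolding ev4_def by (intro rhom_hev)

lemma ev4_vars:
  assumes "rhom f"
  shows "ev4 f X Q B A varX = X" "ev4 f X Q B A varQ = Q" "ev4 f X Q B A varB = B" "ev4 f X Q B A varA = A"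
  using assms
  by (simp_all add: ev4_def varX_def varQ_def varB_def varA_def hev_pCons rhom_hev rhomD)

lemma ev4_comp:
  assumes f: "rhom f" and g: "rhom g"
  shows "g (ev4 f X Q B A p) = ev4 (\<lambda>x. g (f x)) (g X) (g Q) (g B) (g A) p"
proof -
  have r1: "rhom (hev f A)" using f by (simp add: rhom_hev)
  have r2: "rhom (hev (hev f A) B)" using r1 by (simp add: rhom_hev)
  have r3: "rhom (hev (hev (hev f A) B) Q)" using r2 by (simp add: rhom_hev)
  have c1: "(\<lambda>x. g (hev f A x)) = hev (\<lambda>x. g (f x)) (g A)"
    using hev_comp[OF f g] by auto
  have c2: "(\<lambda>x. g (hev (hev f A) B x)) = hev (hev (\<lambda>x. g (f x)) (g A)) (g B)"
    using hev_comp[OF r1 g] by (auto simp: c1)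
  have c3: "(\<lambda>x. g (hev (hev (hev f A) B) Q x)) = hev (hev (hev (\<lambda>x. g (f x)) (g A)) (g B)) (g Q)"
    using hev_comp[OF r2 g] by (auto simp: c2)
  show ?thesis unfolding ev4_def hev_comp[OF r3 g] c3 ..
qed

lemma ev4_id: "ev4 (\<lambda>c. [:[:[:[:c:]:]:]:]) varX varQ varB varA p = p"
proof -
  define f0 where "f0 = (\<lambda>c::rat. [:[:[:[:c:]:]:]:] :: mpoly4)"
  have r0: "rhom f0" by (simp add: rhom_def f0_def pCons_one)
  have l1: "hev f0 varA r = [:[:[:r:]:]:]" for r
  proof (induction r)
    case 0 then show ?case by simp
  next
    case (pCons a r)
    show ?case unfolding hev_pCons[OF r0] pCons.IH by (simp add: f0_def varA_def)
  qed
  have l2: "hev (hev f0 varA) varB s = [:[:s:]:]" for s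
  proof (induction s)
    case 0 then show ?case by simp
  next
    case (pCons a s)
    have r1: "rhom (hev f0 varA)" using r0 by (rule rhom_hev)
    show ?case unfolding hev_pCons[OF r1] pCons.IH by (simp add: l1 varB_def)
  qed
  have l3: "hev (hev (hev f0 varA) varB) varQ t = [:t:]" for t
  proof (induction t)
    case 0 then show ?case by simp
  next
    case (pCons a t)
    have r2: "rhom (hev (hev f0 varA) varB)" using r0 by (intro rhom_hev)
    show ?case unfolding hev_pCons[OF r2] pCons.IH by (simp add: l2 varQ_def)
  qed
  have l4: "hev (hev (hev (hev f0 varA) varB) varQ) varX u = u" for u
  proof (induction u)
    case 0 then show ?case by simp
  next
    case (pCons a u)
    have r3: "rhom (hev (hev (hev f0 varA) varB) varQ)" using r0 by (intro rhom_hev)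
    show ?case unfolding hev_pCons[OF r3] pCons.IH by (simp add: l3 varX_def)
  qed
  show ?thesis using l4 by (simp add: ev4_def f0_def)
qed


definition cpsi :: "rat \<Rightarrow> mpoly4 poly" where "cpsi c = [:[:[:[:[:c:]:]:]:]:]"
definition psi :: "mpoly4 \<Rightarrow> mpoly4 poly" where
  "psi = ev4 cpsi [:varX:] [:varQ:] [:0, varB:] [:0, varA:]"

lemma rhom_cpsi: "rhom cpsi" by (simp add: rhom_def cpsi_def pCons_one)
lemma rhom_psi: "rhom psi" unfolding psi_def by (rule rhom_ev4[OF rhom_cpsi])
lemma rhom_eps: "rhom (\<lambda>s::mpoly4 poly. poly s 1)" by (simp add: rhom_def)

lemma psi_vars: "psi varQ = [:varQ:]" "psi varA = [:0, varA:]" "psi varB = [:0, varB:]"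
  unfolding psi_def by (simp_all add: ev4_vars[OF rhom_cpsi])

lemma eps_psi: "poly (psi p) 1 = p"
proof -
  have "poly (psi p) 1 = ev4 (\<lambda>x. poly (cpsi x) 1) (poly [:varX:] 1) (poly [:varQ:] 1) (poly [:0, varB:] 1) (poly [:0, varA:] 1) p"
    unfolding psi_def by (rule ev4_comp[OF rhom_cpsi rhom_eps])
  also have "\<dots> = ev4 (\<lambda>c. [:[:[:[:c:]:]:]:]) varX varQ varB varA p"
    by (simp add: cpsi_def)
  also have "\<dots> = p" by (rule ev4_id)
  finally show ?thesis .
qed

lemma const_power: "[:a:] ^ n = [:a ^ n:]"
  by (induction n) (simp_all add: pCons_one algebra_simps)

lemma one_minus_lin: "(1::'a::comm_ring_1 poly) - [:0, d:] = [:1, - d:]"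
  by (rule poly_eqI) (simp add: coeff_pCons split: nat.split)

lemma irr1:
  fixes U :: mpoly4
  assumes pU: "psi U = [:0, U:]" and U0: "U \<noteq> 0"
  shows "irreducible (1 - U * varQ ^ n)"
proof -
  define P where "P = 1 - U * varQ ^ n"
  have Q0: "varQ \<noteq> 0" by (simp add: varQ_def)
  have d0: "U * varQ ^ n \<noteq> 0" using U0 Q0 by simp
  have pP: "psi P = [:1, - (U * varQ ^ n):]"
  proof -
    have "psi P = 1 - [:0, U:] * [:varQ ^ n:]"
      unfolding P_def by (simp add: rhom_diff[OF rhom_psi] rhomD[OF rhom_psi] rhom_power[OF rhom_psi] pU psi_vars const_power)
    also have "[:0, U:] * [:varQ ^ n:] = [:0, U * varQ ^ n:]" by (simp add: mult.commute)
    finally show ?thesis by (simp add: one_minus_lin)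
  qed
  have degP: "degree (psi P) = 1" using d0 by (simp add: pP)
  have c0P: "coeff (psi P) 0 = 1" by (simp add: pP)
  show ?thesis unfolding P_def[symmetric]
  proof (rule irreducibleI)
    show "P \<noteq> 0"
    proof
      assume "P = 0"
      then have "psi P = 0" by (simp add: rhomD[OF rhom_psi])
      then show False using degP by simp
    qed
    show "\<not> P dvd 1"
    proof
      assume "P dvd 1"
      then have "psi P dvd 1" using rhom_unit[OF rhom_psi] by blast
      then obtain c where "psi P = [:c:]" by (auto simp: is_unit_poly_iff)
      then show False using degP by simp
    qed
    fix g h assume gh: "P = g * h"
    then have m: "psi P = psi g * psi h" by (simp add: rhomD[OF rhom_psi])
    have ng: "psi g \<noteq> 0" and nh: "psi h \<noteq> 0" using m degP by auto
    have dsum: "degree (psi g) + degree (psi h) = 1"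
      using degree_mult_eq[OF ng nh] m degP by simp
    have c0: "coeff (psi g) 0 * coeff (psi h) 0 = 1"
      using m c0P by (simp add: coeff_mult_0)
    have unit_of: "is_unit r" if "degree (psi r) = 0" "coeff (psi r) 0 * d = 1" for r d
    proof -
      from that(1) have "psi r = [:coeff (psi r) 0:]" by (metis degree_eq_zeroE coeff_pCons_0)
      then have "poly (psi r) 1 = coeff (psi r) 0" by (metis poly_pCons poly_0 mult_zero_right add_0_right)
      then have "r = coeff (psi r) 0" using eps_psi[of r] by simp
      then show ?thesis using that(2) by (metis dvdI)
    qed
    show "g dvd 1 \<or> h dvd 1"
    proof (cases "degree (psi g) = 0")
      case True
      then show ?thesis using unit_of[OF True c0] by simp
    next
      case False
      then have "degree (psi h) = 0" using dsum by simp
      then show ?thesis using unit_of[of h "coeff (psi g) 0"] c0 by (simp add: mult.commute)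
    qed
  qed
qed


definition hA :: "nat \<Rightarrow> mpoly4 \<Rightarrow> rat" where "hA n = ev4 (\<lambda>c. c) 0 2 1 (1 / 2 ^ n)"
definition hB :: "nat \<Rightarrow> mpoly4 \<Rightarrow> rat" where "hB n = ev4 (\<lambda>c. c) 0 2 (1 / 2 ^ n) 1"

lemma rhom_idr: "rhom (\<lambda>c::rat. c)" by (simp add: rhom_def)
lemma rhom_hA: "rhom (hA n)" unfolding hA_def by (rule rhom_ev4[OF rhom_idr])
lemma rhom_hB: "rhom (hB n)" unfolding hB_def by (rule rhom_ev4[OF rhom_idr])

lemma hA_vars: "hA n varQ = 2" "hA n varA = 1 / 2 ^ n" "hA n varB = 1"
  unfolding hA_def by (simp_all add: ev4_vars[OF rhom_idr])
lemma hB_vars: "hB n varQ = 2" "hB n varA = 1" "hB n varB = 1 / 2 ^ n"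
  unfolding hB_def by (simp_all add: ev4_vars[OF rhom_idr])

lemmas hA_simps = rhom_diff[OF rhom_hA] rhomD[OF rhom_hA] rhom_power[OF rhom_hA] hA_vars
lemmas hB_simps = rhom_diff[OF rhom_hB] rhomD[OF rhom_hB] rhom_power[OF rhom_hB] hB_vars

lemma psiA: "psi varA = [:0, varA:]" by (rule psi_vars)
lemma psiB: "psi varB = [:0, varB:]" by (rule psi_vars)

lemma varA_nz: "varA \<noteq> 0" by (simp add: varA_def)
lemma varB_nz: "varB \<noteq> 0" by (simp add: varB_def)

lemma prime1: "prime_elem (1 - varA * varQ ^ n)"
  by (rule irreducible_imp_prime_elem_gcd, rule irr1[OF psiA varA_nz])
lemma prime2: "prime_elem (1 - varB * varQ ^ n)"
  by (rule irreducible_imp_prime_elem_gcd, rule irr1[OF psiB varB_nz])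

lemma cop_eval:
  fixes P D :: mpoly4
  assumes pr: "prime_elem P" and h: "rhom h" and hP: "h P = 0" and hD: "h D \<noteq> 0"
  shows "coprime D P"
proof -
  have "\<not> P dvd D"
  proof
    assume "P dvd D"
    then have "h P dvd h D" by (rule rhom_dvd[OF h])
    then show False using hP hD by simp
  qed
  then have "coprime P D" by (rule prime_elem_imp_coprime[OF pr])
  then show ?thesis by (simp add: coprime_commute)
qed

lemma hA_P1: "hA n (1 - varA * varQ ^ n) = 0" by (simp add: hA_simps)
lemma hB_P2: "hB n (1 - varB * varQ ^ n) = 0" by (simp add: hB_simps)

lemma copQ:
  assumes "hA n D \<noteq> 0" "hB n D \<noteq> 0"
  shows "coprime D ((1 - varA * varQ ^ n) * (1 - varB * varQ ^ n))"
  using cop_eval[OF prime1 rhom_hA hA_P1 assms(1)] cop_eval[OF prime2 rhom_hB hB_P2 assms(2)]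
  by simp

lemma two_pow_inj: "(2::rat) ^ a = 2 ^ b \<longleftrightarrow> a = b"
  by (simp add: power_inject_exp)

lemma cop12: "0 < n \<Longrightarrow> coprime (1 - varA * varQ ^ n) (1 - varB * varQ ^ n)"
proof -
  assume "0 < n"
  then have "hB n (1 - varA * varQ ^ n) \<noteq> 0" using two_pow_inj[of n 0] by (simp add: hB_simps)
  then show ?thesis using cop_eval[OF prime2 rhom_hB hB_P2] by blast
qed

lemma D_q: "hA n varQ \<noteq> 0 \<and> hB n varQ \<noteq> 0" by (simp add: hA_vars hB_vars)

lemma D1: "0 < m \<Longrightarrow> hA n (1 - varQ ^ m) \<noteq> 0 \<and> hB n (1 - varQ ^ m) \<noteq> 0"
  using two_pow_inj[of m 0] by (simp add: hA_simps hB_simps)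

lemma D2:
  assumes "odd n" "even m"
  shows "hA n (1 - varA * varB * varQ ^ m) \<noteq> 0 \<and> hB n (1 - varA * varB * varQ ^ m) \<noteq> 0"
proof -
  have "m \<noteq> n" using assms by auto
  then have "(2::rat) ^ m \<noteq> 2 ^ n" by (simp add: two_pow_inj)
  then show ?thesis by (simp add: hA_simps hB_simps field_simps)
qed

lemma D3:
  assumes "n = Suc (2 * N)"
  shows "hA n (varQ ^ (2 * N) - varB * varQ ^ (4 * j + 3)) \<noteq> 0 \<and> hB n (varQ ^ (2 * N) - varB * varQ ^ (4 * j + 3)) \<noteq> 0
       \<and> hA n (varQ ^ (2 * N) - varA * varQ ^ (4 * j + 3)) \<noteq> 0 \<and> hB n (varQ ^ (2 * N) - varA * varQ ^ (4 * j + 3)) \<noteq> 0"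
proof -
  have e1: "(2::rat) ^ (2 * N) \<noteq> 2 ^ (4 * j + 3)" unfolding two_pow_inj by presburger
  have e2: "(2::rat) ^ (2 * N + n) \<noteq> 2 ^ (4 * j + 3)" unfolding two_pow_inj using assms by presburger
  have e3: "(2::rat) ^ (2 * N) - 1 / 2 ^ n * 2 ^ (4 * j + 3) \<noteq> 0"
  proof
    assume "(2::rat) ^ (2 * N) - 1 / 2 ^ n * 2 ^ (4 * j + 3) = 0"
    then have "(2::rat) ^ (2 * N) * 2 ^ n = 2 ^ (4 * j + 3)" by (simp add: field_simps)
    then show False using e2 by (simp add: power_add)
  qed
  show ?thesis using e1 e3 by (simp add: hA_simps hB_simps)
qed


lemma qpoch_0 [simp]: "qpoch y z 0 = 1"
  by (simp add: qpoch_def)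

lemma qpoch_Suc: "qpoch y z (Suc m) = qpoch y z m * (1 - y * z ^ m)"
  by (simp add: qpoch_def)

lemma qpoch_add: "qpoch y z (m + k) = qpoch y z m * qpoch (y * z ^ m) z k"
  by (induction k) (simp_all add: qpoch_Suc power_add mult_ac)

lemma qpoch_Suc_left: "qpoch y z (Suc m) = (1 - y) * qpoch (y * z) z m"
  using qpoch_add[of y z 1 m] by (simp add: qpoch_def)

lemma qpoch_split: "j \<le> k \<Longrightarrow> qpoch y z k = qpoch y z j * qpoch (y * z ^ j) z (k - j)"
  using qpoch_add[of y z j "k - j"] by simp

lemma qpoch_nz: "(\<And>i. i < m \<Longrightarrow> y * z ^ i \<noteq> (1::'a::field)) \<Longrightarrow> qpoch y z m \<noteq> 0"
  by (simp add: qpoch_def)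

definition qbr :: "'a::field \<Rightarrow> nat \<Rightarrow> nat \<Rightarrow> 'a" where
  "qbr p k j = (if j \<le> k then qpoch p p k / (qpoch p p j * qpoch p p (k - j)) else 0)"

definition Wf :: "'a::comm_ring_1 \<Rightarrow> 'a \<Rightarrow> 'a \<Rightarrow> 'a \<Rightarrow> nat \<Rightarrow> 'a" where
  "Wf y p u v j = (\<Prod>i<j. y * p ^ i * (v * p ^ i - u))"

lemma pp_nz:
  fixes p :: "'a::field"
  assumes "\<forall>i. 0 < i \<longrightarrow> p ^ i \<noteq> 1"
  shows "qpoch p p m \<noteq> 0"
proof (rule qpoch_nz)
  fix i assume "i < m"
  have "p * p ^ i = p ^ Suc i" by simp
  then show "p * p ^ i \<noteq> 1" using assms by (metis zero_less_Suc)
qed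

lemma qbr_0 [simp]:
  assumes "\<forall>i. 0 < i \<longrightarrow> p ^ i \<noteq> 1"
  shows "qbr p k 0 = 1"
proof -
  have "qpoch p p k \<noteq> 0" by (rule pp_nz[OF assms])
  then show ?thesis by (simp add: qbr_def)
qed

lemma qbr_gt [simp]: "k < j \<Longrightarrow> qbr p k j = 0"
  by (simp add: qbr_def)

lemma qbr_diag [simp]:
  assumes "\<forall>i. 0 < i \<longrightarrow> p ^ i \<noteq> 1"
  shows "qbr p k k = 1"
proof -
  have "qpoch p p k \<noteq> 0" by (rule pp_nz[OF assms])
  then show ?thesis by (simp add: qbr_def)
qed

lemma qbr_aux:
  fixes a :: "'a::field"
  assumes "a \<noteq> 0" "c \<noteq> 0" "1 - u \<noteq> 0" "1 - w \<noteq> 0"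
  shows "K * (1 - u * w) / (a * (1 - u) * (c * (1 - w))) = K / (a * (c * (1 - w))) + u * (K / (a * (1 - u) * c))"
proof -
  define D where "D = a * (1 - u) * (c * (1 - w))"
  have e1: "K / (a * (c * (1 - w))) = K * (1 - u) / D"
    using assms by (simp add: D_def)
  have e2: "u * (K / (a * (1 - u) * c)) = u * K * (1 - w) / D"
    using assms by (simp add: D_def)
  have "K * (1 - u) / D + u * K * (1 - w) / D = (K * (1 - u) + u * K * (1 - w)) / D"
    by (simp add: add_divide_distrib)
  also have "K * (1 - u) + u * K * (1 - w) = K * (1 - u * w)" by (simp add: algebra_simps)
  finally show ?thesis unfolding e1 e2 D_def by simp
qed

lemma qbr_Suc_Suc:
  fixes p :: "'a::field"
  assumes "\<forall>i. 0 < i \<longrightarrow> p ^ i \<noteq> 1"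
  shows "qbr p (Suc k) (Suc j) = qbr p k j + p ^ Suc j * qbr p k (Suc j)"
proof (cases "j < k")
  case True
  have nz: "\<And>m. qpoch p p m \<noteq> 0" using pp_nz[OF assms] .
  have e1: "Suc k - Suc j = Suc (k - Suc j)" "k - j = Suc (k - Suc j)" using True by auto
  have "Suc k = Suc j + Suc (k - Suc j)" using True by simp
  then have pw: "p ^ Suc k = p ^ Suc j * p ^ Suc (k - Suc j)"
    by (metis power_add)
  define a where "a = qpoch p p j"
  define c where "c = qpoch p p (k - Suc j)"
  define K where "K = qpoch p p k"
  define u where "u = p ^ Suc j"
  define w where "w = p ^ Suc (k - Suc j)"
  have uw: "p * p ^ k = u * w" unfolding u_def w_def using pw by simp
  have h1: "qpoch p p (Suc k) = K * (1 - u * w)" by (simp add: qpoch_Suc K_def uw)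
  have h2: "qpoch p p (Suc j) = a * (1 - u)" by (simp add: qpoch_Suc a_def u_def)
  have h3: "qpoch p p (Suc (k - Suc j)) = c * (1 - w)" by (simp add: qpoch_Suc c_def w_def)
  have h4: "qpoch p p (k - j) = c * (1 - w)" using h3 e1 by simp
  have "u \<noteq> 1" using assms unfolding u_def by blast
  then have nu: "1 - u \<noteq> 0" by simp
  have "w \<noteq> 1" using assms unfolding w_def by blast
  then have nw: "1 - w \<noteq> 0" by simp
  have na: "a \<noteq> 0" and nc: "c \<noteq> 0" using nz by (auto simp: a_def c_def)
  have "qbr p (Suc k) (Suc j) = K * (1 - u * w) / (a * (1 - u) * (c * (1 - w)))"
    using True by (simp add: qbr_def h1 h2 h3 e1)
  moreover have "qbr p k j = K / (a * (c * (1 - w)))"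
    using True by (simp add: qbr_def h4 K_def a_def)
  moreover have "qbr p k (Suc j) = K / (a * (1 - u) * c)"
    using True by (simp add: qbr_def h2 K_def c_def)
  ultimately show ?thesis
    using qbr_aux[OF na nc nu nw, of K] by (simp add: u_def)
next
  case False
  then show ?thesis
    using assms by (cases "j = k") simp_all
qed

lemma Wf_0 [simp]: "Wf y p u v 0 = 1" by (simp add: Wf_def)

lemma Wf_Suc: "Wf y p u v (Suc j) = Wf y p u v j * (y * p ^ j * (v * p ^ j - u))"
  by (simp add: Wf_def)

lemma Wf_scale: "Wf (y * p) p u v j = p ^ j * Wf y p u v j"
  by (induction j) (simp_all add: Wf_Suc mult_ac)

lemma Wf_s: "Wf s p u v j = s ^ j * Wf 1 p u v j"
  by (induction j) (simp_all add: Wf_Suc mult_ac)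

text \<open>First q-Chu-Vandermonde (polynomial form).\<close>
lemma q1:
  fixes p :: "'a::field"
  assumes hp: "\<forall>i. 0 < i \<longrightarrow> p ^ i \<noteq> 1"
  shows "qpoch (y * u) p k = (\<Sum>j\<le>k. qbr p k j * Wf y p u v j * qpoch (y * v * p ^ j) p (k - j))"
proof (induction k arbitrary: y)
  case 0
  then show ?case using hp by simp
next
  case (Suc k)
  define X where "X j = Wf y p u v j * qpoch (y * v * p ^ j) p (Suc k - j)" for j
  have "(\<Sum>j\<le>Suc k. qbr p (Suc k) j * Wf y p u v j * qpoch (y * v * p ^ j) p (Suc k - j))
      = (\<Sum>j\<le>Suc k. qbr p (Suc k) j * X j)"
    by (simp add: X_def mult.assoc)
  also have "\<dots> = X 0 + (\<Sum>j\<le>k. qbr p (Suc k) (Suc j) * X (Suc j))"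
    unfolding sum.atMost_Suc_shift using hp by simp
  also have "\<dots> = X 0 + (\<Sum>j\<le>k. qbr p k j * X (Suc j)) + (\<Sum>j\<le>k. p ^ Suc j * qbr p k (Suc j) * X (Suc j))"
    by (simp add: qbr_Suc_Suc[OF hp] algebra_simps sum.distrib)
  also have "(\<Sum>j\<le>k. p ^ Suc j * qbr p k (Suc j) * X (Suc j)) = (\<Sum>j\<le>k. p ^ j * qbr p k j * X j) - X 0"
  proof -
    have "(\<Sum>j\<le>Suc k. p ^ j * qbr p k j * X j) = p ^ 0 * qbr p k 0 * X 0 + (\<Sum>j\<le>k. p ^ Suc j * qbr p k (Suc j) * X (Suc j))"
      by (rule sum.atMost_Suc_shift)
    also have "p ^ 0 * qbr p k 0 * X 0 = X 0" using hp by simp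
    finally have A: "(\<Sum>j\<le>Suc k. p ^ j * qbr p k j * X j) = X 0 + (\<Sum>j\<le>k. p ^ Suc j * qbr p k (Suc j) * X (Suc j))" .
    have B: "(\<Sum>j\<le>Suc k. p ^ j * qbr p k j * X j) = (\<Sum>j\<le>k. p ^ j * qbr p k j * X j)"
      by simp
    from A B show ?thesis by (simp add: algebra_simps)
  qed
  also have "X 0 + (\<Sum>j\<le>k. qbr p k j * X (Suc j)) + ((\<Sum>j\<le>k. p ^ j * qbr p k j * X j) - X 0)
      = (\<Sum>j\<le>k. qbr p k j * (X (Suc j) + p ^ j * X j))"
    by (simp add: algebra_simps sum.distrib)
  also have "\<dots> = (\<Sum>j\<le>k. (1 - y * u) * (qbr p k j * Wf (y * p) p u v j * qpoch (y * p * v * p ^ j) p (k - j)))"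
  proof (rule sum.cong[OF refl])
    fix j assume "j \<in> {..k}"
    then have jk: "j \<le> k" by simp
    have e: "Suc k - j = Suc (k - j)" "Suc k - Suc j = k - j" using jk by auto
    define Qj where "Qj = qpoch (y * p * v * p ^ j) p (k - j)"
    have a1: "y * v * p ^ Suc j = y * p * v * p ^ j" by (simp add: mult_ac)
    have a2: "y * v * p ^ j * p = y * p * v * p ^ j" by (simp add: mult_ac)
    have XS: "X (Suc j) = Wf y p u v j * (y * p ^ j * (v * p ^ j - u)) * Qj"
      unfolding X_def Wf_Suc e a1 Qj_def ..
    have XJ: "X j = Wf y p u v j * (1 - y * v * p ^ j) * Qj"
      unfolding X_def e qpoch_Suc_left a2 Qj_def by (simp add: mult_ac)
    show "qbr p k j * (X (Suc j) + p ^ j * X j) =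
        (1 - y * u) * (qbr p k j * Wf (y * p) p u v j * qpoch (y * p * v * p ^ j) p (k - j))"
      unfolding XS XJ Wf_scale Qj_def[symmetric] by (simp add: algebra_simps)
  qed
  also have "\<dots> = (1 - y * u) * qpoch (y * p * u) p k"
    using Suc.IH[of "y * p"] by (simp add: sum_distrib_left)
  also have "\<dots> = qpoch (y * u) p (Suc k)"
    by (simp add: qpoch_Suc_left mult_ac)
  finally show ?case by simp
qed


definition cc :: "'a::field \<Rightarrow> nat \<Rightarrow> nat \<Rightarrow> 'a" where
  "cc p M m = qpoch (inverse p ^ M) p m / qpoch p p m"

lemma cc_0 [simp]: "cc p M 0 = 1" by (simp add: cc_def)

lemma cc_gt:
  fixes p :: "'a::field"
  assumes "p \<noteq> 0" "M < m"
  shows "cc p M m = 0"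
proof -
  have "M \<in> {..<m}" using assms by simp
  moreover have "1 - inverse p ^ M * p ^ M = 0" using assms by (simp add: power_inverse)
  ultimately have "qpoch (inverse p ^ M) p m = 0"
    unfolding qpoch_def by (metis finite_lessThan prod_zero)
  then show ?thesis by (simp add: cc_def)
qed

lemma cc_Suc:
  fixes p :: "'a::field"
  assumes p0: "p \<noteq> 0" and hp: "\<forall>i. 0 < i \<longrightarrow> p ^ i \<noteq> 1"
  shows "cc p (Suc M) (Suc m) = inverse p ^ Suc m * (cc p M (Suc m) - cc p M m)"
proof -
  define t where "t = inverse p"
  define A where "A = qpoch (t ^ M) p m"
  define P where "P = qpoch p p m"
  define X where "X = A / (P * (1 - p ^ Suc m))"
  have P0: "P \<noteq> 0" unfolding P_def by (rule pp_nz[OF hp])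
  have "p ^ Suc m \<noteq> 1" using hp by blast
  then have d0: "1 - p ^ Suc m \<noteq> 0" by simp
  have tp: "t * p = 1" using p0 by (simp add: t_def)
  have tpm: "t ^ Suc m * p ^ Suc m = 1" by (metis power_mult_distrib tp power_one)
  have L: "cc p (Suc M) (Suc m) = X * (1 - t ^ Suc M)"
  proof -
    have "qpoch (t ^ Suc M) p (Suc m) = (1 - t ^ Suc M) * qpoch (t ^ Suc M * p) p m"
      by (rule qpoch_Suc_left)
    also have "t ^ Suc M * p = t ^ M" using tp by (simp add: mult_ac)
    finally have "qpoch (t ^ Suc M) p (Suc m) = (1 - t ^ Suc M) * A" by (simp add: A_def)
    moreover have "qpoch p p (Suc m) = P * (1 - p ^ Suc m)" by (simp add: qpoch_Suc P_def)
    ultimately show ?thesis by (simp add: cc_def X_def t_def mult_ac)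
  qed
  have R1: "cc p M (Suc m) = X * (1 - t ^ M * p ^ m)"
    by (simp add: cc_def X_def qpoch_Suc t_def A_def P_def mult_ac)
  have R2: "cc p M m = X * (1 - p ^ Suc m)"
    using d0 by (simp add: cc_def X_def t_def A_def P_def)
  have "t ^ Suc m * ((1 - t ^ M * p ^ m) - (1 - p ^ Suc m)) = t ^ Suc m * p ^ Suc m - t ^ Suc m * (t ^ M * p ^ m)"
    by (simp add: algebra_simps)
  also have "t ^ Suc m * (t ^ M * p ^ m) = t ^ Suc M * (t ^ m * p ^ m)"
    by (simp add: mult_ac power_add)
  also have "t ^ m * p ^ m = 1" by (metis power_mult_distrib tp power_one)
  finally have "t ^ Suc m * ((1 - t ^ M * p ^ m) - (1 - p ^ Suc m)) = t ^ Suc m * p ^ Suc m - t ^ Suc M * 1" .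
  then have key: "t ^ Suc m * ((1 - t ^ M * p ^ m) - (1 - p ^ Suc m)) = 1 - t ^ Suc M"
    by (simp only: tpm mult_1_right)
  have "inverse p ^ Suc m * (cc p M (Suc m) - cc p M m) = X * (t ^ Suc m * ((1 - t ^ M * p ^ m) - (1 - p ^ Suc m)))"
    unfolding R1 R2 t_def by (simp add: algebra_simps)
  also have "\<dots> = X * (1 - t ^ Suc M)" by (simp only: key)
  finally show ?thesis using L by simp
qed

text \<open>Second q-Chu-Vandermonde (polynomial form).\<close>
lemma q2:
  fixes p :: "'a::field"
  assumes p0: "p \<noteq> 0" and hp: "\<forall>i. 0 < i \<longrightarrow> p ^ i \<noteq> 1"
  shows "(\<Sum>m\<le>M. cc p M m * p ^ m * qpoch \<beta> p m * qpoch (\<gamma> * p ^ m) p (M - m)) = (\<Prod>i<M. \<beta> - \<gamma> * p ^ i)"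
proof (induction M arbitrary: \<gamma>)
  case 0
  then show ?case by simp
next
  case (Suc M)
  define Y where "Y m = qpoch \<beta> p m * qpoch (\<gamma> * p ^ m) p (Suc M - m)" for m
  define Z where "Z m = qpoch \<beta> p (Suc m) * qpoch (\<gamma> * p ^ Suc m) p (M - m)" for m
  have tp: "\<And>m. inverse p ^ m * p ^ m = 1" using p0 by (simp add: power_inverse field_simps)
  have "(\<Sum>m\<le>Suc M. cc p (Suc M) m * p ^ m * qpoch \<beta> p m * qpoch (\<gamma> * p ^ m) p (Suc M - m))
      = qpoch \<gamma> p (Suc M) + (\<Sum>m\<le>M. cc p (Suc M) (Suc m) * p ^ Suc m * Z m)"
    unfolding sum.atMost_Suc_shift by (simp add: Z_def mult.assoc)
  also have "(\<Sum>m\<le>M. cc p (Suc M) (Suc m) * p ^ Suc m * Z m) = (\<Sum>m\<le>M. (cc p M (Suc m) - cc p M m) * Z m)"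
  proof (rule sum.cong[OF refl])
    fix m
    have "cc p (Suc M) (Suc m) * p ^ Suc m = (cc p M (Suc m) - cc p M m) * (inverse p ^ Suc m * p ^ Suc m)"
      by (simp only: cc_Suc[OF p0 hp] mult_ac)
    then show "cc p (Suc M) (Suc m) * p ^ Suc m * Z m = (cc p M (Suc m) - cc p M m) * Z m"
      by (simp only: tp mult_1_right)
  qed
  also have "\<dots> = (\<Sum>m\<le>M. cc p M (Suc m) * Y (Suc m)) - (\<Sum>m\<le>M. cc p M m * Z m)"
    by (simp add: Y_def Z_def algebra_simps sum_subtractf)
  also have "(\<Sum>m\<le>M. cc p M (Suc m) * Y (Suc m)) = (\<Sum>m\<le>M. cc p M m * Y m) - qpoch \<gamma> p (Suc M)"
  proof -
    have A: "(\<Sum>m\<le>Suc M. cc p M m * Y m) = cc p M 0 * Y 0 + (\<Sum>m\<le>M. cc p M (Suc m) * Y (Suc m))"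
      by (rule sum.atMost_Suc_shift)
    have c0: "cc p M (Suc M) = 0" by (rule cc_gt[OF p0]) simp
    have B: "(\<Sum>m\<le>Suc M. cc p M m * Y m) = (\<Sum>m\<le>M. cc p M m * Y m)"
      by (simp add: c0)
    have C: "cc p M 0 * Y 0 = qpoch \<gamma> p (Suc M)" by (simp add: Y_def)
    from A B C have "qpoch \<gamma> p (Suc M) + (\<Sum>m\<le>M. cc p M (Suc m) * Y (Suc m)) = (\<Sum>m\<le>M. cc p M m * Y m)"
      by simp
    then show ?thesis by (metis add_diff_cancel_left')
  qed
  also have "qpoch \<gamma> p (Suc M) + ((\<Sum>m\<le>M. cc p M m * Y m) - qpoch \<gamma> p (Suc M) - (\<Sum>m\<le>M. cc p M m * Z m))
      = (\<Sum>m\<le>M. cc p M m * (Y m - Z m))"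
    by (simp add: algebra_simps sum_subtractf)
  also have "\<dots> = (\<Sum>m\<le>M. (\<beta> - \<gamma>) * (cc p M m * p ^ m * qpoch \<beta> p m * qpoch (\<gamma> * p * p ^ m) p (M - m)))"
  proof (rule sum.cong[OF refl])
    fix m assume "m \<in> {..M}"
    then have mM: "m \<le> M" by simp
    have e: "Suc M - m = Suc (M - m)" using mM by simp
    have g: "\<gamma> * p ^ m * p = \<gamma> * p * p ^ m" "\<gamma> * p ^ Suc m = \<gamma> * p * p ^ m" by (simp_all add: mult_ac)
    define R where "R = qpoch (\<gamma> * p * p ^ m) p (M - m)"
    have YY: "Y m = qpoch \<beta> p m * ((1 - \<gamma> * p ^ m) * R)"
      unfolding Y_def e qpoch_Suc_left g R_def ..
    have ZZ: "Z m = qpoch \<beta> p m * (1 - \<beta> * p ^ m) * R"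
      unfolding Z_def qpoch_Suc g R_def ..
    show "cc p M m * (Y m - Z m) = (\<beta> - \<gamma>) * (cc p M m * p ^ m * qpoch \<beta> p m * qpoch (\<gamma> * p * p ^ m) p (M - m))"
      unfolding YY ZZ R_def[symmetric] by (simp add: algebra_simps)
  qed
  also have "\<dots> = (\<beta> - \<gamma>) * (\<Prod>i<M. \<beta> - \<gamma> * p * p ^ i)"
    unfolding sum_distrib_left[symmetric] Suc.IH[of "\<gamma> * p"] ..
  also have "\<dots> = (\<Prod>i<Suc M. \<beta> - \<gamma> * p ^ i)"
    unfolding prod.lessThan_Suc_shift by (simp add: mult_ac)
  finally show ?case .
qed

lemma q2div:
  fixes p :: "'a::field"
  assumes p0: "p \<noteq> 0" and hp: "\<forall>i. 0 < i \<longrightarrow> p ^ i \<noteq> 1" and g0: "qpoch \<gamma> p M \<noteq> 0"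
  shows "(\<Sum>m\<le>M. cc p M m * p ^ m * qpoch \<beta> p m / qpoch \<gamma> p m) = (\<Prod>i<M. \<beta> - \<gamma> * p ^ i) / qpoch \<gamma> p M"
proof -
  have "(\<Sum>m\<le>M. cc p M m * p ^ m * qpoch \<beta> p m / qpoch \<gamma> p m) * qpoch \<gamma> p M
      = (\<Sum>m\<le>M. cc p M m * p ^ m * qpoch \<beta> p m * qpoch (\<gamma> * p ^ m) p (M - m))"
    unfolding sum_distrib_right
  proof (rule sum.cong[OF refl])
    fix m assume "m \<in> {..M}"
    then have mM: "m \<le> M" by simp
    have s: "qpoch \<gamma> p M = qpoch \<gamma> p m * qpoch (\<gamma> * p ^ m) p (M - m)" by (rule qpoch_split[OF mM])
    with g0 have "qpoch \<gamma> p m \<noteq> 0" by auto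
    then show "cc p M m * p ^ m * qpoch \<beta> p m / qpoch \<gamma> p m * qpoch \<gamma> p M =
         cc p M m * p ^ m * qpoch \<beta> p m * qpoch (\<gamma> * p ^ m) p (M - m)"
      unfolding s by simp
  qed
  also have "\<dots> = (\<Prod>i<M. \<beta> - \<gamma> * p ^ i)" by (rule q2[OF p0 hp])
  finally show ?thesis using g0 by (simp add: field_simps)
qed


definition Fg :: "'a::field \<Rightarrow> 'a \<Rightarrow> 'a \<Rightarrow> nat \<Rightarrow> 'a" where
  "Fg p B x N = (\<Sum>k\<le>N. qpoch (inverse p ^ N) p k * qpoch B p k * qpoch x p k * p ^ k
       / (qpoch p p k * qpoch (B * p / p ^ N) (p ^ 2) k))"

lemma sum_swap_tri:
  fixes f :: "nat \<Rightarrow> nat \<Rightarrow> 'a::comm_monoid_add"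
  shows "(\<Sum>k\<le>N. \<Sum>j\<le>k. f k j) = (\<Sum>j\<le>N. \<Sum>m\<le>N - j. f (j + m) j)"
proof -
  have "(\<Sum>(i,m)\<in>{(i,m). i + m \<le> N}. f (i + m) i) = (\<Sum>k\<le>N. \<Sum>i\<le>k. f (i + (k - i)) i)"
    by (rule sum.triangle_reindex_eq[of "\<lambda>i m. f (i + m) i" N])
  also have "\<dots> = (\<Sum>k\<le>N. \<Sum>j\<le>k. f k j)"
    by (intro sum.cong refl) auto
  finally have 1: "(\<Sum>(i,m)\<in>{(i,m). i + m \<le> N}. f (i + m) i) = (\<Sum>k\<le>N. \<Sum>j\<le>k. f k j)" .
  have "{(i,m). i + m \<le> N} = Sigma {..N} (\<lambda>i. {..N - i})" by auto
  then have "(\<Sum>(i,m)\<in>{(i,m). i + m \<le> N}. f (i + m) i) = (\<Sum>j\<le>N. \<Sum>m\<le>N - j. f (j + m) j)"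
    by (simp add: sum.Sigma)
  with 1 show ?thesis by simp
qed

lemma qpoch_sq:
  fixes s C :: "'a::comm_ring_1"
  assumes "s * s = 1"
  shows "qpoch (C ^ 2) (p ^ 2) k = qpoch (s * C) p k * qpoch (- (s * C)) p k"
  unfolding qpoch_def prod.distrib[symmetric]
proof (rule prod.cong[OF refl])
  fix i
  have "(1 - s * C * p ^ i) * (1 - - (s * C) * p ^ i) = 1 - (s * s) * C ^ 2 * (p ^ i) ^ 2"
    by (simp add: algebra_simps power2_eq_square)
  also have "\<dots> = 1 - C ^ 2 * (p ^ 2) ^ i" using assms by (simp add: power_mult[symmetric] mult.commute)
  finally show "1 - C ^ 2 * (p ^ 2) ^ i = (1 - s * C * p ^ i) * (1 - - (s * C) * p ^ i)" by simp
qed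

lemma G4s:
  fixes p C x s :: "'a::field"
  assumes p0: "p \<noteq> 0" and hp: "\<forall>i. 0 < i \<longrightarrow> p ^ i \<noteq> 1"
    and hC: "\<forall>i. C * p ^ i \<noteq> 1 \<and> C * p ^ i \<noteq> - 1"
    and hs: "s * s = 1"
    and hB: "B = C ^ 2 * p ^ N / p"
  shows "Fg p B (s * x) N = s ^ N * (\<Sum>j\<le>N. Wf 1 p x C j * qpoch (inverse p ^ N) p j * qpoch B p j * p ^ j
            * (\<Prod>i<N - j. C * p ^ (j + i)) / (qpoch p p j * qpoch (C ^ 2) (p ^ 2) j))"
proof -
  have s1: "s = 1 \<or> s = -1" using hs by (metis square_eq_1_iff power2_eq_square)
  have hsC: "\<And>i j. s * C * p ^ j * p ^ i \<noteq> 1 \<and> - (s * C) * p ^ j * p ^ i \<noteq> 1"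
  proof -
    fix i j
    have e: "p ^ j * p ^ i = p ^ (j + i)" by (simp add: power_add)
    have "C * p ^ (j + i) \<noteq> 1" "C * p ^ (j + i) \<noteq> - 1" using hC by auto
    then show "s * C * p ^ j * p ^ i \<noteq> 1 \<and> - (s * C) * p ^ j * p ^ i \<noteq> 1"
      using s1 e by (auto simp: mult.assoc) (metis minus_equation_iff)+
  qed
  have nzP: "\<And>m. qpoch p p m \<noteq> 0" by (rule pp_nz[OF hp])
  have nz1: "\<And>j m. qpoch (s * C * p ^ j) p m \<noteq> 0"
    by (rule qpoch_nz) (use hsC in \<open>simp add: mult.assoc\<close>)
  have nz2: "\<And>j m. qpoch (- (s * C) * p ^ j) p m \<noteq> 0"
    by (rule qpoch_nz) (use hsC in \<open>simp add: mult.assoc\<close>)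
  have nz1': "\<And>m. qpoch (s * C) p m \<noteq> 0" using nz1[of 0] by simp
  have nz2': "\<And>m. qpoch (- (s * C)) p m \<noteq> 0" using nz2[of 0] by simp
  have BC: "B * p / p ^ N = C ^ 2" using p0 by (simp add: hB)
  define a where "a k = qpoch (inverse p ^ N) p k * qpoch B p k * p ^ k / qpoch p p k" for k
  have S2: "qpoch (s * x) p k / qpoch (s * C) p k = (\<Sum>j\<le>k. qbr p k j * Wf s p x C j / qpoch (s * C) p j)" for k
  proof -
    have "qpoch (s * x) p k = (\<Sum>j\<le>k. qbr p k j * Wf s p x C j * qpoch (s * C * p ^ j) p (k - j))"
      by (rule q1[OF hp])
    also have "\<dots> = (\<Sum>j\<le>k. qbr p k j * Wf s p x C j / qpoch (s * C) p j) * qpoch (s * C) p k"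
      unfolding sum_distrib_right
    proof (rule sum.cong[OF refl])
      fix j assume "j \<in> {..k}"
      then have jk: "j \<le> k" by simp
      show "qbr p k j * Wf s p x C j * qpoch (s * C * p ^ j) p (k - j) =
          qbr p k j * Wf s p x C j / qpoch (s * C) p j * qpoch (s * C) p k"
        unfolding qpoch_split[OF jk, of "s * C" p] using nz1'[of j] by simp
    qed
    finally show ?thesis using nz1'[of k] by simp
  qed
  have S3: "Fg p B (s * x) N = (\<Sum>k\<le>N. \<Sum>j\<le>k. a k * (qbr p k j * Wf s p x C j / qpoch (s * C) p j) / qpoch (- (s * C)) p k)"
    unfolding Fg_def BC
  proof (rule sum.cong[OF refl])
    fix k
    have "qpoch (inverse p ^ N) p k * qpoch B p k * qpoch (s * x) p k * p ^ k / (qpoch p p k * qpoch (C ^ 2) (p ^ 2) k)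
        = a k * (qpoch (s * x) p k / qpoch (s * C) p k) / qpoch (- (s * C)) p k"
      unfolding qpoch_sq[OF hs, of C p k] a_def using nzP[of k] nz1'[of k] nz2'[of k] by (simp add: mult_ac)
    then show "qpoch (inverse p ^ N) p k * qpoch B p k * qpoch (s * x) p k * p ^ k / (qpoch p p k * qpoch (C ^ 2) (p ^ 2) k)
        = (\<Sum>j\<le>k. a k * (qbr p k j * Wf s p x C j / qpoch (s * C) p j) / qpoch (- (s * C)) p k)"
      unfolding S2 by (simp add: sum_distrib_left sum_divide_distrib)
  qed
  also have "\<dots> = (\<Sum>j\<le>N. \<Sum>m\<le>N - j. a (j + m) * (qbr p (j + m) j * Wf s p x C j / qpoch (s * C) p j) / qpoch (- (s * C)) p (j + m))"
    by (rule sum_swap_tri)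
  also have "\<dots> = (\<Sum>j\<le>N. s ^ N * (Wf 1 p x C j * qpoch (inverse p ^ N) p j * qpoch B p j * p ^ j
            * (\<Prod>i<N - j. C * p ^ (j + i)) / (qpoch p p j * qpoch (C ^ 2) (p ^ 2) j)))"
  proof (rule sum.cong[OF refl])
    fix j assume "j \<in> {..N}"
    then have jN: "j \<le> N" by simp
    define M where "M = N - j"
    have NjM: "N = j + M" using jN by (simp add: M_def)
    define E where "E = qpoch (inverse p ^ N) p j * qpoch B p j * p ^ j / (qpoch p p j * qpoch (- (s * C)) p j)"
    define \<gamma> where "\<gamma> = - (s * C) * p ^ j"
    have ipN: "inverse p ^ N * p ^ j = inverse p ^ M"
      using p0 by (simp add: NjM power_add power_inverse field_simps)
    have T5: "a (j + m) * (qbr p (j + m) j * Wf s p x C j / qpoch (s * C) p j) / qpoch (- (s * C)) p (j + m)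
        = Wf s p x C j / qpoch (s * C) p j * E * (cc p M m * p ^ m * qpoch (B * p ^ j) p m / qpoch \<gamma> p m)" for m
    proof -
      have q1': "qpoch (inverse p ^ N) p (j + m) = qpoch (inverse p ^ N) p j * qpoch (inverse p ^ M) p m"
        unfolding qpoch_add ipN ..
      have q2': "qpoch B p (j + m) = qpoch B p j * qpoch (B * p ^ j) p m" by (rule qpoch_add)
      have q3': "qpoch (- (s * C)) p (j + m) = qpoch (- (s * C)) p j * qpoch \<gamma> p m"
        unfolding \<gamma>_def by (rule qpoch_add)
      have q4': "qbr p (j + m) j = qpoch p p (j + m) / (qpoch p p j * qpoch p p m)"
        by (simp add: qbr_def)
      have nzg: "qpoch \<gamma> p m \<noteq> 0" unfolding \<gamma>_def by (rule nz2)
      show ?thesis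
        unfolding a_def q1' q2' q3' q4' E_def cc_def power_add
        using nzP[of "j + m"] nzP[of j] nzP[of m] nz1'[of j] nz2'[of j] nzg
        by (simp add: field_simps)
    qed
    have S6: "(\<Sum>m\<le>M. cc p M m * p ^ m * qpoch (B * p ^ j) p m / qpoch \<gamma> p m)
        = (\<Prod>i<M. B * p ^ j - \<gamma> * p ^ i) / qpoch \<gamma> p M"
      by (rule q2div[OF p0 hp]) (unfold \<gamma>_def, rule nz2)
    have S7: "(\<Prod>i<M. B * p ^ j - \<gamma> * p ^ i) = s ^ M * (\<Prod>i<M. C * p ^ (j + i)) * qpoch \<gamma> p M"
    proof -
      have "qpoch \<gamma> p M = (\<Prod>i<M. 1 - \<gamma> * p ^ (M - Suc i))"
        unfolding qpoch_def by (rule prod.nat_diff_reindex[symmetric])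
      then have "s ^ M * (\<Prod>i<M. C * p ^ (j + i)) * qpoch \<gamma> p M
          = (\<Prod>i<M. s * (C * p ^ (j + i)) * (1 - \<gamma> * p ^ (M - Suc i)))"
        by (simp add: prod.distrib)
      also have "\<dots> = (\<Prod>i<M. B * p ^ j - \<gamma> * p ^ i)"
      proof (rule prod.cong[OF refl])
        fix i assume "i \<in> {..<M}"
        then have iM: "i < M" by simp
        have pe: "p ^ (j + i) * p ^ j * p ^ (M - Suc i) * p = p ^ N * p ^ j"
          using iM by (simp add: NjM add_ac flip: power_add power_Suc2)
        have "s * (C * p ^ (j + i)) * (1 - \<gamma> * p ^ (M - Suc i))
            = s * C * p ^ (j + i) + (s * s) * C ^ 2 * (p ^ (j + i) * p ^ j * p ^ (M - Suc i))"
          by (simp add: \<gamma>_def algebra_simps power2_eq_square)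
        also have "p ^ (j + i) * p ^ j * p ^ (M - Suc i) = p ^ N * p ^ j / p"
          using pe p0 by (simp add: field_simps)
        finally show "s * (C * p ^ (j + i)) * (1 - \<gamma> * p ^ (M - Suc i)) = B * p ^ j - \<gamma> * p ^ i"
          using hs by (simp add: hB \<gamma>_def algebra_simps power_add)
      qed
      finally show ?thesis by simp
    qed
    have "(\<Sum>m\<le>N - j. a (j + m) * (qbr p (j + m) j * Wf s p x C j / qpoch (s * C) p j) / qpoch (- (s * C)) p (j + m))
        = Wf s p x C j / qpoch (s * C) p j * E * (\<Sum>m\<le>M. cc p M m * p ^ m * qpoch (B * p ^ j) p m / qpoch \<gamma> p m)"
      unfolding M_def[symmetric] T5 sum_distrib_left ..
    also have "\<dots> = Wf s p x C j / qpoch (s * C) p j * E * (s ^ M * (\<Prod>i<M. C * p ^ (j + i)))"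
      unfolding S6 S7 using nz2[of j M] by (simp add: \<gamma>_def)
    also have "\<dots> = s ^ N * (Wf 1 p x C j * qpoch (inverse p ^ N) p j * qpoch B p j * p ^ j
            * (\<Prod>i<N - j. C * p ^ (j + i)) / (qpoch p p j * qpoch (C ^ 2) (p ^ 2) j))"
    proof -
      have "s ^ N = s ^ j * s ^ M" by (simp add: NjM power_add)
      then show ?thesis
        unfolding E_def Wf_s[of s] qpoch_sq[OF hs, of C p j] M_def[symmetric]
        using nzP[of j] nz1'[of j] nz2'[of j] by (simp add: field_simps)
    qed
    finally show "(\<Sum>m\<le>N - j. a (j + m) * (qbr p (j + m) j * Wf s p x C j / qpoch (s * C) p j) / qpoch (- (s * C)) p (j + m))
        = s ^ N * (Wf 1 p x C j * qpoch (inverse p ^ N) p j * qpoch B p j * p ^ j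
            * (\<Prod>i<N - j. C * p ^ (j + i)) / (qpoch p p j * qpoch (C ^ 2) (p ^ 2) j))" .
  qed
  finally show ?thesis by (simp add: sum_distrib_left)
qed


lemma G4:
  fixes p C x :: "'a::field"
  assumes p0: "p \<noteq> 0" and hp: "\<forall>i. 0 < i \<longrightarrow> p ^ i \<noteq> 1"
    and hC: "\<forall>i. C * p ^ i \<noteq> 1 \<and> C * p ^ i \<noteq> - 1"
    and hB: "B = C ^ 2 * p ^ N / p"
  shows "Fg p B x N = (-1) ^ N * Fg p B (- x) N"
proof -
  define T where "T = (\<Sum>j\<le>N. Wf 1 p x C j * qpoch (inverse p ^ N) p j * qpoch B p j * p ^ j
            * (\<Prod>i<N - j. C * p ^ (j + i)) / (qpoch p p j * qpoch (C ^ 2) (p ^ 2) j))"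
  have 1: "Fg p B (1 * x) N = 1 ^ N * T" unfolding T_def using hB by (intro G4s[OF p0 hp hC]) simp_all
  have 2: "Fg p B ((-1) * x) N = (-1) ^ N * T" unfolding T_def using hB by (intro G4s[OF p0 hp hC]) simp_all
  have "((-1::'a) ^ N) * ((-1) ^ N) = 1" by (simp flip: power_mult_distrib)
  then show ?thesis using 1 2 by (simp add: mult.assoc[symmetric])
qed

lemma poly_qpoch: "poly (qpoch P Z k) y = qpoch (poly P y) (poly Z y) k"
  by (simp add: qpoch_def poly_prod)

lemma transfer:
  fixes p x :: "'a::field"
  assumes hp: "\<forall>i. 0 < i \<longrightarrow> p ^ i \<noteq> 1" and S: "infinite S"
    and hS: "\<forall>B\<in>S. qpoch (B * p / p ^ N) (p ^ 2) N \<noteq> 0 \<and> Fg p B x N = (-1) ^ N * Fg p B (- x) N"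
    and h0: "qpoch (B0 * p / p ^ N) (p ^ 2) N \<noteq> 0"
  shows "Fg p B0 x N = (-1) ^ N * Fg p B0 (- x) N"
proof -
  define c where "c k = qpoch (inverse p ^ N) p k * p ^ k / qpoch p p k * (qpoch x p k - (-1) ^ N * qpoch (- x) p k)" for k
  define \<Psi> where "\<Psi> = (\<Sum>k\<le>N. smult (c k) (qpoch [:0, 1:] [:p:] k * qpoch (smult (p / p ^ N * (p ^ 2) ^ k) [:0, 1:]) [:p ^ 2:] (N - k)))"
  have key: "poly \<Psi> B = qpoch (B * p / p ^ N) (p ^ 2) N * (Fg p B x N - (-1) ^ N * Fg p B (- x) N)"
    if hB: "qpoch (B * p / p ^ N) (p ^ 2) N \<noteq> 0" for B
  proof -
    have "poly \<Psi> B = (\<Sum>k\<le>N. c k * (qpoch B p k * qpoch (B * p / p ^ N * (p ^ 2) ^ k) (p ^ 2) (N - k)))"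
      unfolding \<Psi>_def poly_sum by (simp add: poly_qpoch mult_ac)
    also have "\<dots> = qpoch (B * p / p ^ N) (p ^ 2) N * (\<Sum>k\<le>N. c k * qpoch B p k / qpoch (B * p / p ^ N) (p ^ 2) k)"
      unfolding sum_distrib_left
    proof (rule sum.cong[OF refl])
      fix k assume "k \<in> {..N}"
      then have kN: "k \<le> N" by simp
      have sp: "qpoch (B * p / p ^ N) (p ^ 2) N = qpoch (B * p / p ^ N) (p ^ 2) k * qpoch (B * p / p ^ N * (p ^ 2) ^ k) (p ^ 2) (N - k)"
        by (rule qpoch_split[OF kN])
      with hB have n1: "qpoch (B * p / p ^ N) (p ^ 2) k \<noteq> 0" by auto
      show "c k * (qpoch B p k * qpoch (B * p / p ^ N * (p ^ 2) ^ k) (p ^ 2) (N - k)) =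
         qpoch (B * p / p ^ N) (p ^ 2) N * (c k * qpoch B p k / qpoch (B * p / p ^ N) (p ^ 2) k)"
        unfolding sp using n1 by simp
    qed
    also have "(\<Sum>k\<le>N. c k * qpoch B p k / qpoch (B * p / p ^ N) (p ^ 2) k) = Fg p B x N - (-1) ^ N * Fg p B (- x) N"
      unfolding Fg_def sum_distrib_left sum_subtractf[symmetric]
    proof (rule sum.cong[OF refl])
      fix k assume "k \<in> {..N}"
      then have kN: "k \<le> N" by simp
      have sp: "qpoch (B * p / p ^ N) (p ^ 2) N = qpoch (B * p / p ^ N) (p ^ 2) k * qpoch (B * p / p ^ N * (p ^ 2) ^ k) (p ^ 2) (N - k)"
        by (rule qpoch_split[OF kN])
      with hB have n1: "qpoch (B * p / p ^ N) (p ^ 2) k \<noteq> 0" by auto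
      have n2: "qpoch p p k \<noteq> 0" by (rule pp_nz[OF hp])
      show "c k * qpoch B p k / qpoch (B * p / p ^ N) (p ^ 2) k =
         qpoch (inverse p ^ N) p k * qpoch B p k * qpoch x p k * p ^ k / (qpoch p p k * qpoch (B * p / p ^ N) (p ^ 2) k)
         - (-1) ^ N * (qpoch (inverse p ^ N) p k * qpoch B p k * qpoch (- x) p k * p ^ k / (qpoch p p k * qpoch (B * p / p ^ N) (p ^ 2) k))"
        unfolding c_def using n1 n2 by (simp add: field_simps)
    qed
    finally show ?thesis .
  qed
  have "\<Psi> = 0"
  proof (rule ccontr)
    assume "\<Psi> \<noteq> 0"
    then have "finite {B. poly \<Psi> B = 0}" by (rule poly_roots_finite)
    moreover have "S \<subseteq> {B. poly \<Psi> B = 0}" using hS key by auto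
    ultimately show False using S finite_subset by blast
  qed
  then have "qpoch (B0 * p / p ^ N) (p ^ 2) N * (Fg p B0 x N - (-1) ^ N * Fg p B0 (- x) N) = 0"
    using key[OF h0] by simp
  with h0 show ?thesis by simp
qed


lemma fr_add: "Fract (a::'a::idom) 1 + Fract b 1 = Fract (a + b) 1" by simp
lemma fr_mult: "Fract (a::'a::idom) 1 * Fract b 1 = Fract (a * b) 1" by simp
lemma fr_diff: "Fract (a::'a::idom) 1 - Fract b 1 = Fract (a - b) 1" by simp
lemma fr_minus: "- Fract (a::'a::idom) 1 = Fract (- a) 1" by simp
lemma fr_one: "(1::'a::idom fract) = Fract 1 1" by (simp add: fract_collapse)
lemma fr_zero: "(0::'a::idom fract) = Fract 0 1" by (simp add: fract_collapse)
lemma fr_power: "Fract (a::'a::idom) 1 ^ k = Fract (a ^ k) 1"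
  by (induction k) (simp_all add: fract_collapse)
lemma fr_eq: "Fract (a::'a::idom) 1 = Fract b 1 \<longleftrightarrow> a = b" by (simp add: eq_fract)
lemma fr_nz: "Fract (a::'a::idom) 1 \<noteq> 0 \<longleftrightarrow> a \<noteq> 0"
  using fr_eq[of a 0] by (simp add: fract_collapse)
lemma one_minus_fr: "1 - Fract (a::'a::idom) 1 = Fract (1 - a) 1" by (simp add: fr_one)
lemma fr_div: "b \<noteq> 0 \<Longrightarrow> Fract (a::'a::idom) 1 / Fract b 1 = Fract a b"
  by (simp add: divide_fract_def fract_collapse)

subsection \<open>Localization and congruences\<close>

definition inL :: "mpoly4 \<Rightarrow> ratfun4 \<Rightarrow> bool" where
  "inL Q z \<longleftrightarrow> (\<exists>c d. d \<noteq> 0 \<and> coprime d Q \<and> z = Fract c d)"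

definition cg :: "mpoly4 \<Rightarrow> mpoly4 \<Rightarrow> ratfun4 \<Rightarrow> ratfun4 \<Rightarrow> bool" where
  "cg Q P z w \<longleftrightarrow> (\<exists>y. inL Q y \<and> z - w = Fract P 1 * y)"

lemma inL_Fract: "d \<noteq> 0 \<Longrightarrow> coprime d Q \<Longrightarrow> inL Q (Fract c d)"
  by (auto simp: inL_def)

lemma inL_fr: "inL Q (Fract c 1)" by (rule inL_Fract) simp_all

lemma inL_0: "inL Q 0" using inL_fr[of Q 0] by (simp add: fract_collapse)
lemma inL_1: "inL Q 1" using inL_fr[of Q 1] by (simp add: fract_collapse)

lemma inL_add: "inL Q z \<Longrightarrow> inL Q w \<Longrightarrow> inL Q (z + w)"
proof -
  assume "inL Q z" "inL Q w"
  then obtain c d c' d' where h: "d \<noteq> 0" "coprime d Q" "z = Fract c d" "d' \<noteq> 0" "coprime d' Q" "w = Fract c' d'"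
    by (auto simp: inL_def)
  then have "z + w = Fract (c * d' + c' * d) (d * d')" by simp
  moreover have "d * d' \<noteq> 0" "coprime (d * d') Q" using h by auto
  ultimately show ?thesis by (simp add: inL_Fract)
qed

lemma inL_mult: "inL Q z \<Longrightarrow> inL Q w \<Longrightarrow> inL Q (z * w)"
proof -
  assume "inL Q z" "inL Q w"
  then obtain c d c' d' where h: "d \<noteq> 0" "coprime d Q" "z = Fract c d" "d' \<noteq> 0" "coprime d' Q" "w = Fract c' d'"
    by (auto simp: inL_def)
  then have "z * w = Fract (c * c') (d * d')" by simp
  moreover have "d * d' \<noteq> 0" "coprime (d * d') Q" using h by auto
  ultimately show ?thesis by (simp add: inL_Fract)
qed

lemma inL_uminus: "inL Q z \<Longrightarrow> inL Q (- z)"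
proof -
  assume "inL Q z"
  then obtain c d where h: "d \<noteq> 0" "coprime d Q" "z = Fract c d"
    by (auto simp: inL_def)
  then have "- z = Fract (- c) d" by simp
  then show ?thesis using h by (simp add: inL_Fract)
qed

lemma inL_diff: "inL Q z \<Longrightarrow> inL Q w \<Longrightarrow> inL Q (z - w)"
  using inL_add[of Q z "- w"] inL_uminus[of Q w] by simp

lemma inL_power: "inL Q z \<Longrightarrow> inL Q (z ^ k)"
  by (induction k) (simp_all add: inL_1 inL_mult)

lemma inL_sum: "(\<And>k. k \<in> A \<Longrightarrow> inL Q (f k)) \<Longrightarrow> inL Q (sum f A)"
  by (induction A rule: infinite_finite_induct) (simp_all add: inL_0 inL_add)

lemma inL_prod: "(\<And>k. k \<in> A \<Longrightarrow> inL Q (f k)) \<Longrightarrow> inL Q (prod f A)"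
  by (induction A rule: infinite_finite_induct) (simp_all add: inL_1 inL_mult)

lemma inL_qpoch: "inL Q y \<Longrightarrow> inL Q z \<Longrightarrow> inL Q (qpoch y z k)"
  unfolding qpoch_def by (intro inL_prod inL_diff inL_1 inL_mult inL_power)

lemma inL_inv_fr: "d \<noteq> 0 \<Longrightarrow> coprime d Q \<Longrightarrow> inL Q (inverse (Fract d 1))"
  by (simp add: inL_Fract)

lemma cgI: "inL Q y \<Longrightarrow> z - w = Fract P 1 * y \<Longrightarrow> cg Q P z w"
  by (auto simp: cg_def)

lemma cg_refl: "cg Q P z z"
  by (rule cgI[OF inL_0]) simp

lemma cg_eq: "z = w \<Longrightarrow> cg Q P z w"
  by (simp add: cg_refl)

lemma cg_sym: "cg Q P z w \<Longrightarrow> cg Q P w z"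
  unfolding cg_def
proof (elim exE conjE)
  fix y assume "inL Q y" "z - w = Fract P 1 * y"
  then show "\<exists>y. inL Q y \<and> w - z = Fract P 1 * y"
    by (intro exI[of _ "- y"]) (auto simp: inL_uminus algebra_simps)
qed

lemma cg_trans: "cg Q P z w \<Longrightarrow> cg Q P w v \<Longrightarrow> cg Q P z v"
  unfolding cg_def
proof (elim exE conjE)
  fix y1 y2 assume "inL Q y1" "z - w = Fract P 1 * y1" "inL Q y2" "w - v = Fract P 1 * y2"
  then show "\<exists>y. inL Q y \<and> z - v = Fract P 1 * y"
    by (intro exI[of _ "y1 + y2"]) (auto simp: inL_add algebra_simps)
qed

lemma cg_add: "cg Q P z z' \<Longrightarrow> cg Q P w w' \<Longrightarrow> cg Q P (z + w) (z' + w')"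
  unfolding cg_def
proof (elim exE conjE)
  fix y1 y2 assume "inL Q y1" "z - z' = Fract P 1 * y1" "inL Q y2" "w - w' = Fract P 1 * y2"
  then show "\<exists>y. inL Q y \<and> z + w - (z' + w') = Fract P 1 * y"
    by (intro exI[of _ "y1 + y2"]) (auto simp: inL_add algebra_simps)
qed

lemma cg_scale: "inL Q c \<Longrightarrow> cg Q P z w \<Longrightarrow> cg Q P (c * z) (c * w)"
  unfolding cg_def
proof (elim exE conjE)
  fix y assume "inL Q c" "inL Q y" "z - w = Fract P 1 * y"
  then show "\<exists>y. inL Q y \<and> c * z - c * w = Fract P 1 * y"
    by (intro exI[of _ "c * y"]) (auto simp: inL_mult algebra_simps)
qed

lemma cg_mult:
  assumes "cg Q P z z'" "cg Q P w w'" "inL Q z" "inL Q w'"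
  shows "cg Q P (z * w) (z' * w')"
proof -
  have "cg Q P (z * w) (z * w')" by (rule cg_scale[OF assms(3) assms(2)])
  moreover have "cg Q P (w' * z) (w' * z')" by (rule cg_scale[OF assms(4) assms(1)])
  ultimately show ?thesis by (metis cg_trans mult.commute)
qed

lemma cg_sum: "(\<And>k. k \<in> A \<Longrightarrow> cg Q P (f k) (g k)) \<Longrightarrow> cg Q P (sum f A) (sum g A)"
  by (induction A rule: infinite_finite_induct) (simp_all add: cg_refl cg_add)

lemma cg_prod:
  fixes m :: nat
  assumes "\<And>j. j < m \<Longrightarrow> cg Q P (f j) (g j) \<and> inL Q (f j) \<and> inL Q (g j)"
  shows "cg Q P (\<Prod>j<m. f j) (\<Prod>j<m. g j)"
  using assms
proof (induction m)
  case 0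
  then show ?case by (simp add: cg_refl)
next
  case (Suc m)
  have IH: "cg Q P (\<Prod>j<m. f j) (\<Prod>j<m. g j)" using Suc by simp
  have "inL Q (\<Prod>j<m. f j)" using Suc.prems by (intro inL_prod) simp
  moreover have "cg Q P (f m) (g m)" "inL Q (g m)" using Suc.prems by auto
  ultimately show ?case using IH by (simp add: cg_mult)
qed

lemma cg_qpoch:
  assumes "cg Q P y y'" "inL Q y" "inL Q y'" "inL Q z"
  shows "cg Q P (qpoch y z k) (qpoch y' z k)"
  unfolding qpoch_def
proof (rule cg_prod)
  fix j
  have "cg Q P (1 - y * z ^ j) (1 - y' * z ^ j)"
  proof -
    have "cg Q P (- (z ^ j) * y) (- (z ^ j) * y')"
      by (rule cg_scale) (use assms in \<open>simp_all add: inL_uminus inL_power\<close>)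
    then have "cg Q P (1 + - (z ^ j) * y) (1 + - (z ^ j) * y')" by (intro cg_add cg_refl)
    then show ?thesis by (simp add: algebra_simps)
  qed
  then show "cg Q P (1 - y * z ^ j) (1 - y' * z ^ j) \<and> inL Q (1 - y * z ^ j) \<and> inL Q (1 - y' * z ^ j)"
    using assms by (simp add: inL_diff inL_1 inL_mult inL_power)
qed

lemma cg_inverse:
  assumes "cg Q P z w" "inL Q (inverse z)" "inL Q (inverse w)" "z \<noteq> 0" "w \<noteq> 0"
  shows "cg Q P (inverse z) (inverse w)"
proof -
  obtain y where y: "inL Q y" "z - w = Fract P 1 * y" using assms(1) by (auto simp: cg_def)
  have "inverse z - inverse w = - (inverse z * (z - w) * inverse w)"
    using assms(4,5) by (rule inverse_diff_inverse)
  also have "\<dots> = Fract P 1 * (- y * inverse z * inverse w)"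
    unfolding y(2) by (simp add: algebra_simps)
  finally show ?thesis
    by (intro cgI[of _ "- y * inverse z * inverse w"]) (use y assms in \<open>simp_all add: inL_mult inL_uminus\<close>)
qed

lemma cg_combine:
  fixes P1 P2 :: mpoly4
  assumes c1: "cg (P1 * P2) P1 z w" and c2: "cg (P1 * P2) P2 z w" and cp: "coprime P1 P2"
  shows "cong_rf z w (P1 * P2)"
proof -
  obtain c1 d1 where h1: "d1 \<noteq> 0" "coprime d1 (P1 * P2)" "z - w = Fract P1 1 * Fract c1 d1"
    using c1 by (auto simp: cg_def inL_def)
  obtain c2 d2 where h2: "d2 \<noteq> 0" "coprime d2 (P1 * P2)" "z - w = Fract P2 1 * Fract c2 d2"
    using c2 by (auto simp: cg_def inL_def)
  have "Fract (P1 * c1) d1 = Fract (P2 * c2) d2" using h1(3) h2(3) by simp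
  then have eq: "P1 * c1 * d2 = P2 * c2 * d1" using h1(1) h2(1) by (simp add: eq_fract)
  have "P2 dvd P1 * c1 * d2" unfolding eq by simp
  moreover have "coprime P2 d2" using h2(2) by (simp add: coprime_commute)
  moreover have "coprime P2 P1" using cp by (simp add: coprime_commute)
  ultimately have "P2 dvd c1"
  proof -
    assume a: "P2 dvd P1 * c1 * d2" "coprime P2 d2" "coprime P2 P1"
    from a(1) have "P2 dvd P1 * (c1 * d2)" by (simp add: mult.assoc)
    then have "P2 dvd c1 * d2" using coprime_dvd_mult_right_iff[OF a(3)] by blast
    then show "P2 dvd c1" using coprime_dvd_mult_left_iff[OF a(2)] by blast
  qed
  then obtain e where e: "c1 = P2 * e" by (auto simp: dvd_def)
  have "Fract (P1 * P2) 1 * Fract e 1 / Fract d1 1 = Fract (P1 * P2) 1 * Fract e d1"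
    using h1(1) by (simp add: mult.assoc fr_div)
  also have "\<dots> = Fract P1 1 * Fract c1 d1" by (simp add: e mult.assoc)
  finally have "z - w = Fract (P1 * P2) 1 * Fract e 1 / Fract d1 1" using h1(3) by simp
  then show ?thesis unfolding cong_rf_def using h1(1,2) by blast
qed


lemma inverse_qpoch: "inverse (qpoch (y::'a::field) z k) = (\<Prod>j<k. inverse (1 - y * z ^ (j::nat)))"
  unfolding qpoch_def prod_inversef[symmetric] by (simp add: comp_def)

lemma inL_inv_qpoch:
  assumes "\<And>j. j < k \<Longrightarrow> inL Q (inverse (1 - y * z ^ j))"
  shows "inL Q (inverse (qpoch y z k))"
  unfolding inverse_qpoch by (rule inL_prod) (simp add: assms)

lemma qpoch_nz': "(\<And>j. j < k \<Longrightarrow> 1 - y * z ^ j \<noteq> (0::'a::field)) \<Longrightarrow> qpoch y z k \<noteq> 0"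
  by (simp add: qpoch_def)

lemma fract_nz:
  assumes "b \<noteq> 0" "a \<noteq> 0"
  shows "Fract (a::'a::idom) b \<noteq> 0"
proof
  assume "Fract a b = 0"
  then have "Fract a b = Fract 0 1" by (simp add: fract_collapse)
  then have "a * 1 = 0 * b" using assms(1) by (simp only: eq_fract(1)[OF assms(1) one_neq_zero])
  then show False using assms(2) by simp
qed

lemma subst_world:
  fixes U V Q :: mpoly4 and N :: nat and x :: ratfun4
  defines "q \<equiv> Fract varQ 1" and "u \<equiv> Fract U 1" and "v \<equiv> Fract V 1"
  assumes hx: "inL Q x"
    and cq: "coprime varQ Q" and nq: "varQ \<noteq> 0"
    and c1: "\<And>m. 0 < m \<Longrightarrow> coprime (1 - varQ ^ m) Q \<and> 1 - varQ ^ m \<noteq> 0"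
    and c2: "\<And>j. coprime (1 - U * V * varQ ^ (4 * j + 4)) Q \<and> 1 - U * V * varQ ^ (4 * j + 4) \<noteq> 0"
    and c3: "\<And>j. coprime (varQ ^ (2 * N) - V * varQ ^ (4 * j + 3)) Q \<and> varQ ^ (2 * N) - V * varQ ^ (4 * j + 3) \<noteq> 0"
  shows "cg Q (1 - U * varQ ^ Suc (2 * N))
    (\<Sum>k<Suc (2 * N). qpoch (u*q) (q^2) k * qpoch (v*q) (q^2) k * qpoch x (q^2) k * q^(2*k)
            / (qpoch (q^2) (q^2) k * qpoch (u*v*q^4) (q^4) k))
    (Fg (q^2) (v*q) x N)"
proof -
  define n where "n = Suc (2 * N)"
  define p where "p = q ^ 2"
  define t where "t = inverse p ^ N"
  define P where "P = 1 - U * varQ ^ n"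
  have q0: "q \<noteq> 0" using nq by (simp add: q_def fr_nz)
  have iq: "inL Q q" "inL Q u" "inL Q v" by (simp_all add: q_def u_def v_def inL_fr)
  have ip: "inL Q p" using iq by (simp add: p_def inL_power)
  have p0: "p \<noteq> 0" using q0 by (simp add: p_def)
  have pN: "p ^ N = q ^ (2 * N)" by (simp add: p_def power_mult)
  have t_fr: "t = Fract 1 (varQ ^ (2 * N))"
    by (simp add: t_def power_inverse pN q_def fr_power)
  have it: "inL Q t" unfolding t_fr using cq nq by (intro inL_Fract) simp_all
  have tq: "t * q ^ (2 * N) = 1" using q0 by (simp add: t_def power_inverse pN)
  have fP: "Fract P 1 = 1 - u * q ^ n"
    by (simp add: P_def u_def q_def fr_power one_minus_fr)
  have base: "cg Q P (u * q) t"
  proof (rule cgI[of _ "- t"])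
    show "inL Q (- t)" using it by (rule inL_uminus)
    have "q ^ n * t = q" using tq by (simp add: n_def mult_ac)
    then show "u * q - t = Fract P 1 * - t" unfolding fP by (simp add: algebra_simps)
  qed
  have base2: "cg Q P (u * v * q ^ 4) (v * q * p / p ^ N)"
  proof -
    have "cg Q P ((v * q ^ 3) * (u * q)) ((v * q ^ 3) * t)"
      by (rule cg_scale[OF _ base]) (use iq in \<open>simp add: inL_mult inL_power\<close>)
    moreover have "(v * q ^ 3) * (u * q) = u * v * q ^ 4" by (simp add: algebra_simps power_Suc numeral_eq_Suc)
    moreover have "(v * q ^ 3) * t = v * q * p / p ^ N"
      by (simp add: t_def p_def power_inverse divide_inverse algebra_simps power_Suc numeral_eq_Suc)
    ultimately show ?thesis by simp
  qed
  have ivq: "inL Q (v * q)" using iq by (simp add: inL_mult)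
  have iuq: "inL Q (u * q)" using iq by (simp add: inL_mult)
  have iB: "inL Q (v * q * p / p ^ N)"
    using ivq ip it by (simp add: t_def divide_inverse power_inverse inL_mult)
  have iuv: "inL Q (u * v * q ^ 4)" using iq by (simp add: inL_mult inL_power)
  have F1: "1 - p * p ^ j = Fract (1 - varQ ^ (2 * j + 2)) 1" for j
    by (simp add: p_def q_def fr_power one_minus_fr power_mult[symmetric] power_add[symmetric] mult_ac)
  have F2: "1 - u * v * q ^ 4 * (p ^ 2) ^ j = Fract (1 - U * V * varQ ^ (4 * j + 4)) 1" for j
  proof -
    have "u * v * q ^ 4 * (p ^ 2) ^ j = Fract (U * V * varQ ^ (4 * j + 4)) 1"
      by (simp add: p_def u_def v_def q_def fr_power power_mult[symmetric] power_add[symmetric] mult_ac) (simp add: ac_simps)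
    then show ?thesis by (simp add: one_minus_fr)
  qed
  have F3: "1 - v * q * p / p ^ N * (p ^ 2) ^ j = Fract (varQ ^ (2 * N) - V * varQ ^ (4 * j + 3)) (varQ ^ (2 * N))" for j
  proof -
    have e: "v * q * p * (p ^ 2) ^ j = Fract (V * varQ ^ (4 * j + 3)) 1"
      by (simp add: p_def v_def q_def fr_power power_mult[symmetric] power_add[symmetric] mult_ac)
         (simp add: power_add power3_eq_cube mult_ac)
    have "1 - v * q * p / p ^ N * (p ^ 2) ^ j = (p ^ N - v * q * p * (p ^ 2) ^ j) / p ^ N"
      using p0 by (simp add: field_simps)
    also have "\<dots> = Fract (varQ ^ (2 * N) - V * varQ ^ (4 * j + 3)) 1 / Fract (varQ ^ (2 * N)) 1"
      unfolding e pN by (simp add: q_def fr_power)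
    also have "\<dots> = Fract (varQ ^ (2 * N) - V * varQ ^ (4 * j + 3)) (varQ ^ (2 * N))"
      using nq by (simp add: fr_div)
    finally show ?thesis .
  qed
  have nz1: "1 - p * p ^ j \<noteq> 0" for j
    unfolding F1 fr_nz using c1[of "2 * j + 2"] by simp
  have in1: "inL Q (inverse (1 - p * p ^ j))" for j
    unfolding F1 using c1[of "2 * j + 2"] by (intro inL_inv_fr) simp_all
  have nz2: "1 - u * v * q ^ 4 * (p ^ 2) ^ j \<noteq> 0" for j
    unfolding F2 fr_nz using c2[of j] by simp
  have in2: "inL Q (inverse (1 - u * v * q ^ 4 * (p ^ 2) ^ j))" for j
    unfolding F2 using c2[of j] by (intro inL_inv_fr) simp_all
  have nz3: "1 - v * q * p / p ^ N * (p ^ 2) ^ j \<noteq> 0" for j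
    unfolding F3 using c3[of j] nq by (intro fract_nz) simp_all
  have in3: "inL Q (inverse (1 - v * q * p / p ^ N * (p ^ 2) ^ j))" for j
    unfolding F3 inverse_fract using c3[of j] nq by (intro inL_Fract) simp_all
  define T where "T k = qpoch (inverse p ^ N) p k * qpoch (v * q) p k * qpoch x p k * p ^ k
       / (qpoch p p k * qpoch (v * q * p / p ^ N) (p ^ 2) k)" for k
  have termcg: "cg Q P (qpoch (u*q) (q^2) k * qpoch (v*q) (q^2) k * qpoch x (q^2) k * q^(2*k)
            / (qpoch (q^2) (q^2) k * qpoch (u*v*q^4) (q^4) k)) (T k)" for k
  proof -
    define R where "R = qpoch (v * q) p k * qpoch x p k * p ^ k"
    have iR: "inL Q R" unfolding R_def using ivq hx ip by (simp add: inL_qpoch inL_mult inL_power)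
    have num: "cg Q P (qpoch (u * q) p k * R) (qpoch t p k * R)"
    proof -
      have "cg Q P (qpoch (u * q) p k) (qpoch t p k)" by (rule cg_qpoch[OF base iuq it ip])
      then have "cg Q P (R * qpoch (u * q) p k) (R * qpoch t p k)" by (rule cg_scale[OF iR])
      then show ?thesis by (simp add: mult.commute)
    qed
    define D where "D = qpoch p p k * qpoch (u * v * q ^ 4) (p ^ 2) k"
    define D' where "D' = qpoch p p k * qpoch (v * q * p / p ^ N) (p ^ 2) k"
    have den: "cg Q P D D'"
      unfolding D_def D'_def
      by (rule cg_scale) (simp_all add: ip inL_qpoch cg_qpoch[OF base2 iuv iB] inL_power)
    have iD: "inL Q (inverse D)" unfolding D_def inverse_mult_distrib
      by (intro inL_mult inL_inv_qpoch in1 in2)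
    have iD': "inL Q (inverse D')" unfolding D'_def inverse_mult_distrib
      by (intro inL_mult inL_inv_qpoch in1 in3)
    have D0: "D \<noteq> 0" unfolding D_def by (intro no_zero_divisors qpoch_nz' nz1 nz2)
    have D0': "D' \<noteq> 0" unfolding D'_def by (intro no_zero_divisors qpoch_nz' nz1 nz3)
    have cinv: "cg Q P (inverse D) (inverse D')" by (rule cg_inverse[OF den iD iD' D0 D0'])
    have inum: "inL Q (qpoch (u * q) p k * R)" using iuq ip iR by (simp add: inL_qpoch inL_mult)
    have "cg Q P ((qpoch (u * q) p k * R) * inverse D) ((qpoch t p k * R) * inverse D')"
      by (rule cg_mult[OF num cinv inum iD'])
    moreover have "(qpoch (u * q) p k * R) * inverse D = qpoch (u*q) (q^2) k * qpoch (v*q) (q^2) k * qpoch x (q^2) k * q^(2*k)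
            / (qpoch (q^2) (q^2) k * qpoch (u*v*q^4) (q^4) k)"
      by (simp add: R_def D_def p_def divide_inverse power_mult[symmetric] mult_ac)
    moreover have "(qpoch t p k * R) * inverse D' = T k"
      by (simp add: R_def D'_def T_def t_def divide_inverse mult_ac)
    ultimately show ?thesis by (simp add: P_def)
  qed
  have "cg Q P (\<Sum>k<n. qpoch (u*q) (q^2) k * qpoch (v*q) (q^2) k * qpoch x (q^2) k * q^(2*k)
            / (qpoch (q^2) (q^2) k * qpoch (u*v*q^4) (q^4) k)) (\<Sum>k<n. T k)"
    by (rule cg_sum) (rule termcg)
  moreover have "(\<Sum>k<n. T k) = (\<Sum>k\<le>N. T k)"
  proof (rule sum.mono_neutral_right)
    show "finite {..<n}" by simp
    show "{..N} \<subseteq> {..<n}" by (auto simp: n_def)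
    show "\<forall>k\<in>{..<n} - {..N}. T k = 0"
    proof
      fix k assume "k \<in> {..<n} - {..N}"
      then have kN: "N < k" by simp
      have "qpoch (inverse p ^ N) p k = 0"
        unfolding qpoch_def
        by (rule prod_zero) (use kN p0 in \<open>auto intro!: bexI[of _ N] simp: power_inverse\<close>)
      then show "T k = 0" by (simp add: T_def)
    qed
  qed
  moreover have "(\<Sum>k\<le>N. T k) = Fg (q^2) (v*q) x N" by (simp add: T_def Fg_def p_def)
  ultimately show ?thesis by (simp add: P_def n_def)
qed


lemma varQ_nz: "varQ \<noteq> 0" by (simp add: varQ_def)

lemma hA0_nz: "hA n D \<noteq> 0 \<Longrightarrow> D \<noteq> 0"
  using rhomD(1)[OF rhom_hA] by auto

lemma qpow_fr: "Fract varQ 1 ^ m = Fract (varQ ^ m) 1" by (rule fr_power)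

lemma qpow_inj: "Fract varQ 1 ^ a = Fract varQ 1 ^ b \<Longrightarrow> a = b"
proof -
  assume "Fract varQ 1 ^ a = Fract varQ 1 ^ b"
  then have "varQ ^ a = varQ ^ b" by (simp add: qpow_fr fr_eq)
  then have "hA 0 (varQ ^ a) = hA 0 (varQ ^ b)" by simp
  then have "(2::rat) ^ a = 2 ^ b" by (simp add: hA_simps)
  then show "a = b" by (simp add: two_pow_inj)
qed

lemma qpow_ne:
  assumes "0 < m"
  shows "Fract varQ 1 ^ m \<noteq> 1 \<and> Fract varQ 1 ^ m \<noteq> - 1"
proof
  show "Fract varQ 1 ^ m \<noteq> 1"
  proof
    assume "Fract varQ 1 ^ m = 1"
    then have "Fract varQ 1 ^ m = Fract varQ 1 ^ 0" by simp
    then show False using qpow_inj assms by fastforce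
  qed
  show "Fract varQ 1 ^ m \<noteq> - 1"
  proof
    assume "Fract varQ 1 ^ m = - 1"
    then have "Fract (varQ ^ m) 1 = Fract (- 1) 1" by (simp add: qpow_fr fr_one)
    then have "varQ ^ m = - 1" by (simp add: fr_eq)
    then have "hA 0 (varQ ^ m) = hA 0 (- 1)" by simp
    then have "(2::rat) ^ m = - 1" by (simp add: hA_simps rhom_uminus[OF rhom_hA])
    moreover have "(0::rat) < 2 ^ m" by simp
    ultimately show False by simp
  qed
qed

lemma F3_lem:
  fixes V :: mpoly4
  defines "q \<equiv> Fract varQ 1" and "v \<equiv> Fract V 1"
  shows "1 - v * q * q ^ 2 / (q ^ 2) ^ N * ((q ^ 2) ^ 2) ^ j = Fract (varQ ^ (2 * N) - V * varQ ^ (4 * j + 3)) (varQ ^ (2 * N))"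
proof -
  define p where "p = q ^ 2"
  have q0: "q \<noteq> 0" using varQ_nz by (simp add: q_def fr_nz)
  have p0: "p \<noteq> 0" using q0 by (simp add: p_def)
  have pN: "p ^ N = q ^ (2 * N)" by (simp add: p_def power_mult)
  have e: "v * q * p * (p ^ 2) ^ j = Fract (V * varQ ^ (4 * j + 3)) 1"
    by (simp add: p_def v_def q_def fr_power power_mult[symmetric] power_add[symmetric] mult_ac)
       (simp add: power_add power3_eq_cube mult_ac)
  have "1 - v * q * p / p ^ N * (p ^ 2) ^ j = (p ^ N - v * q * p * (p ^ 2) ^ j) / p ^ N"
    using p0 by (simp add: field_simps)
  also have "\<dots> = Fract (varQ ^ (2 * N) - V * varQ ^ (4 * j + 3)) 1 / Fract (varQ ^ (2 * N)) 1"
    unfolding e pN by (simp add: q_def fr_power)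
  also have "\<dots> = Fract (varQ ^ (2 * N) - V * varQ ^ (4 * j + 3)) (varQ ^ (2 * N))"
    using varQ_nz by (simp add: fr_div)
  finally show ?thesis by (simp add: p_def)
qed

lemma FgSym:
  fixes V :: mpoly4 and x :: ratfun4
  defines "q \<equiv> Fract varQ 1" and "v \<equiv> Fract V 1"
  assumes nz: "\<And>j. varQ ^ (2 * N) - V * varQ ^ (4 * j + 3) \<noteq> 0"
  shows "Fg (q ^ 2) (v * q) x N = (-1) ^ N * Fg (q ^ 2) (v * q) (- x) N"
proof -
  define p where "p = q ^ 2"
  have q0: "q \<noteq> 0" using varQ_nz by (simp add: q_def fr_nz)
  have p0: "p \<noteq> 0" using q0 by (simp add: p_def)
  have qne: "\<And>m. 0 < m \<Longrightarrow> q ^ m \<noteq> 1 \<and> q ^ m \<noteq> - 1" unfolding q_def by (rule qpow_ne)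
  have hp: "\<forall>i. 0 < i \<longrightarrow> p ^ i \<noteq> 1"
    using qne by (simp add: p_def power_mult[symmetric])
  define S where "S = (\<lambda>i. (q ^ Suc i) ^ 2 * p ^ N / p) ` UNIV"
  have infS: "infinite S"
  proof -
    have "inj (\<lambda>i. (q ^ Suc i) ^ 2 * p ^ N / p)"
    proof (rule injI)
      fix i j assume "(q ^ Suc i) ^ 2 * p ^ N / p = (q ^ Suc j) ^ 2 * p ^ N / p"
      then have "(q ^ Suc i) ^ 2 = (q ^ Suc j) ^ 2" using p0 by simp
      then have "q ^ (Suc i * 2) = q ^ (Suc j * 2)" by (simp only: power_mult)
      then have "Suc i * 2 = Suc j * 2" unfolding q_def by (rule qpow_inj)
      then show "i = j" by simp
    qed
    then show ?thesis unfolding S_def using finite_imageD infinite_UNIV_nat by blast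
  qed
  have hS: "\<forall>B\<in>S. qpoch (B * p / p ^ N) (p ^ 2) N \<noteq> 0 \<and> Fg p B x N = (-1) ^ N * Fg p B (- x) N"
  proof
    fix B assume "B \<in> S"
    then obtain i where B: "B = (q ^ Suc i) ^ 2 * p ^ N / p" by (auto simp: S_def)
    define C where "C = q ^ Suc i"
    have BC: "B * p / p ^ N = C ^ 2" using p0 by (simp add: B C_def)
    have "qpoch (C ^ 2) (p ^ 2) N \<noteq> 0"
    proof (rule qpoch_nz)
      fix j
      have "C ^ 2 * (p ^ 2) ^ j = q ^ (Suc i * 2 + 2 * 2 * j)"
        unfolding C_def p_def by (simp only: power_mult[symmetric] power_add[symmetric])
      also have "Suc i * 2 + 2 * 2 * j = 2 * Suc i + 4 * j" by simp
      finally have "C ^ 2 * (p ^ 2) ^ j = q ^ (2 * Suc i + 4 * j)" .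
      then show "C ^ 2 * (p ^ 2) ^ j \<noteq> 1" using qne[of "2 * Suc i + 4 * j"] by simp
    qed
    moreover have "Fg p B x N = (-1) ^ N * Fg p B (- x) N"
    proof (rule G4[OF p0 hp])
      show "\<forall>j. C * p ^ j \<noteq> 1 \<and> C * p ^ j \<noteq> - 1"
      proof
        fix j
        have "C * p ^ j = q ^ (Suc i + 2 * j)"
          unfolding C_def p_def by (simp only: power_mult[symmetric] power_add[symmetric])
        then show "C * p ^ j \<noteq> 1 \<and> C * p ^ j \<noteq> - 1" using qne[of "Suc i + 2 * j"] by simp
      qed
      show "B = C ^ 2 * p ^ N / p" by (simp add: B C_def)
    qed
    ultimately show "qpoch (B * p / p ^ N) (p ^ 2) N \<noteq> 0 \<and> Fg p B x N = (-1) ^ N * Fg p B (- x) N"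
      by (simp add: BC)
  qed
  have h0: "qpoch (v * q * p / p ^ N) (p ^ 2) N \<noteq> 0"
  proof (rule qpoch_nz)
    fix j
    have "1 - v * q * p / p ^ N * (p ^ 2) ^ j \<noteq> 0"
      unfolding p_def q_def v_def F3_lem using nz[of j] varQ_nz by (intro fract_nz) simp_all
    then show "v * q * p / p ^ N * (p ^ 2) ^ j \<noteq> 1" by simp
  qed
  show ?thesis using transfer[OF hp infS hS h0] by (simp add: p_def)
qed


theorem corollary1p6:
  fixes n :: nat
  assumes "odd n"
  defines "a \<equiv> Fract varA 1" and "b \<equiv> Fract varB 1"
      and "q \<equiv> Fract varQ 1" and "x \<equiv> Fract varX 1"
  shows "cong_rf
    (\<Sum>k<n. qpoch (a*q) (q^2) k * qpoch (b*q) (q^2) k * qpoch x (q^2) k * q^(2*k)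
            / (qpoch (q^2) (q^2) k * qpoch (a*b*q^4) (q^4) k))
    ((-1) ^ ((n - 1) div 2) *
     (\<Sum>k<n. qpoch (a*q) (q^2) k * qpoch (b*q) (q^2) k * qpoch (-x) (q^2) k * q^(2*k)
            / (qpoch (q^2) (q^2) k * qpoch (a*b*q^4) (q^4) k)))
    ((1 - varA * varQ ^ n) * (1 - varB * varQ ^ n))"
proof -
  obtain N where n: "n = Suc (2 * N)" using assms(1) by (metis oddE Suc_eq_plus1)
  have Nn: "(n - 1) div 2 = N" by (simp add: n)
  have Nn': "(n - Suc 0) div 2 = N" by (simp add: n)
  define P1 where "P1 = 1 - varA * varQ ^ n"
  define P2 where "P2 = 1 - varB * varQ ^ n"
  define Q where "Q = P1 * P2"
  have cQ: "coprime D Q" if "hA n D \<noteq> 0" "hB n D \<noteq> 0" for D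
    unfolding Q_def P1_def P2_def by (rule copQ[OF that])
  have cq: "coprime varQ Q" using D_q[of n] cQ by blast
  have c1: "coprime (1 - varQ ^ m) Q \<and> 1 - varQ ^ m \<noteq> 0" if "0 < m" for m
    using D1[OF that, of n] cQ hA0_nz by blast
  have c2a: "coprime (1 - varA * varB * varQ ^ (4 * j + 4)) Q \<and> 1 - varA * varB * varQ ^ (4 * j + 4) \<noteq> 0" for j
  proof -
    have "even (4 * j + 4)" by simp
    then show ?thesis using D2[OF assms(1)] cQ hA0_nz by blast
  qed
  have c2b: "coprime (1 - varB * varA * varQ ^ (4 * j + 4)) Q \<and> 1 - varB * varA * varQ ^ (4 * j + 4) \<noteq> 0" for j
    using c2a[of j] by (simp add: mult.commute)
  have c3a: "coprime (varQ ^ (2 * N) - varB * varQ ^ (4 * j + 3)) Q \<and> varQ ^ (2 * N) - varB * varQ ^ (4 * j + 3) \<noteq> 0" for j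
    using D3[OF n, of j] cQ hA0_nz by blast
  have c3b: "coprime (varQ ^ (2 * N) - varA * varQ ^ (4 * j + 3)) Q \<and> varQ ^ (2 * N) - varA * varQ ^ (4 * j + 3) \<noteq> 0" for j
    using D3[OF n, of j] cQ hA0_nz by blast
  have ix: "inL Q x" "inL Q (- x)" by (simp_all add: x_def inL_fr inL_uminus)
  define L where "L y = (\<Sum>k<n. qpoch (a*q) (q^2) k * qpoch (b*q) (q^2) k * qpoch y (q^2) k * q^(2*k)
            / (qpoch (q^2) (q^2) k * qpoch (a*b*q^4) (q^4) k))" for y
  define L' where "L' y = (\<Sum>k<n. qpoch (b*q) (q^2) k * qpoch (a*q) (q^2) k * qpoch y (q^2) k * q^(2*k)
            / (qpoch (q^2) (q^2) k * qpoch (b*a*q^4) (q^4) k))" for y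
  have LL': "L y = L' y" for y unfolding L_def L'_def by (simp add: mult_ac)
  define s where "s = ((-1)::ratfun4) ^ N"
  have iss: "inL Q s" by (simp add: s_def inL_power inL_uminus inL_1)
  have wa1: "cg Q P1 (L y) (Fg (q^2) (b*q) y N)" if "inL Q y" for y
    unfolding L_def P1_def n a_def b_def q_def
    by (rule subst_world[OF that cq varQ_nz c1 c2a c3a])
  have symA: "Fg (q^2) (b*q) x N = s * Fg (q^2) (b*q) (- x) N"
    unfolding s_def q_def b_def by (rule FgSym) (use c3a in blast)
  have modA: "cg Q P1 (L x) (s * L (- x))"
  proof -
    have "cg Q P1 (s * Fg (q^2) (b*q) (- x) N) (s * L (- x))"
      by (rule cg_scale[OF iss cg_sym[OF wa1[OF ix(2)]]])
    then show ?thesis using cg_trans[OF wa1[OF ix(1)]] symA by simp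
  qed
  have wb1: "cg Q P2 (L' y) (Fg (q^2) (a*q) y N)" if "inL Q y" for y
    unfolding L'_def P2_def n a_def b_def q_def
    by (rule subst_world[OF that cq varQ_nz c1 c2b c3b])
  have symB: "Fg (q^2) (a*q) x N = s * Fg (q^2) (a*q) (- x) N"
    unfolding s_def q_def a_def by (rule FgSym) (use c3b in blast)
  have modB: "cg Q P2 (L x) (s * L (- x))"
  proof -
    have "cg Q P2 (s * Fg (q^2) (a*q) (- x) N) (s * L' (- x))"
      by (rule cg_scale[OF iss cg_sym[OF wb1[OF ix(2)]]])
    then show ?thesis using cg_trans[OF wb1[OF ix(1)]] symB by (simp add: LL')
  qed
  have cop: "coprime P1 P2" unfolding P1_def P2_def by (rule cop12) (simp add: n)
  have "cong_rf (L x) (s * L (- x)) (P1 * P2)"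
    by (rule cg_combine[OF modA[unfolded Q_def] modB[unfolded Q_def] cop])
  then show ?thesis by (simp add: L_def s_def Nn Nn' P1_def P2_def)
qed


end
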